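(* Let $\mathcal O$ be a complete discrete valuation ring with uniformizer $\varpi$ and fraction field $E$. Let $T,\tilde T$ be reduced finite flat local $\mathcal O$-algebras with $\mathcal O$-algebra maps $\lambda:T\to\mathcal O$ and $\tilde\lambda:\tilde T\to\mathcal O$, and corresponding idempotents $e\in T\otimes E$ and $\tilde e\in\tilde T\otimes E$. Let $M_1$ be a $T$-module and $M_2$ a $\tilde T$-module, both finite free over $\mathcal O$. Let $[\,,\,]:M_1\times M_2\to\mathcal O$ be a perfect $\mathcal O$-bilinear pairing (both induced maps $M_1\to\mathrm{Hom}_{\mathcal O}(M_2,\mathcal O)$ and $M_2\to\mathrm{Hom}_{\mathcal O}(M_1,\mathcal O)$ are isomorphisms). Assume that its $E$-bilinear extension satisfies \[[eM_1,(1-\tilde e)M_2]=0\quad\text{and}\quad[(1-e)M_1,\tilde eM_2]=0.\] (a) Then $[\,,\,]$ induces a perfect $\mathcal O$-bilinear pairing $C_0^\lambda(M_1)\times C_0^{\tilde\lambda}(M_2)\to E/\mathcal O$, and $\eta_\lambda(M_1)=\eta_{\tilde\lambda}(M_2)$. (b) If $M_1[\ker\lambda]$ and $M_2[\ker\tilde\lambda]$ are both free of rank $1$ over $\mathcal O$ with bases $\delta_1,\delta_2$, then $\eta_\lambda(M_1)=\eta_{\tilde\lambda}(M_2)=([\delta_1,\delta_2])$.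
   Context: For a reduced finite flat local $\mathcal O$-algebra $T$ with $\lambda:T\to\mathcal O$, there is a canonical decomposition $T\otimes E\cong E\times T^c_E$ whose first projection is $\lambda\otimes E$; $e$ corresponds to $(1,0)$. For a $T$-module $M$ finite free over $\mathcal O$: $C_0^\lambda(M)=eM/(eM\cap M)$ (inside $M\otimes E$), $\eta_\lambda(M)=\mathrm{Fitt}_{\mathcal O}(C_0^\lambda(M))$, and $M[\ker\lambda]=\{m\in M:(\ker\lambda)m=0\}$. *)

theory Defs
  imports "Jordan_Normal_Form.Determinant"
begin

(* The fraction field E is the type 'e (a field), Ov is a subset of it.
   For a finite flat (= finite free) Ov-algebra T, the E-algebra T \<otimes> E is modelled by a
   commutative ring type 'a together with a ring homomorphism iota : E \<rightarrow> T\<otimes>E, and T is an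
   Ov-lattice inside it.  Likewise a T-module M, finite free over Ov, lives inside
   M \<otimes> E, modelled as a module over the ring T \<otimes> E (E acting through iota). *)

definition O_mult :: "'e::comm_ring_1 set \<Rightarrow> 'e \<Rightarrow> 'e set" where
  "O_mult Ov x = (\<lambda>a. a * x) ` Ov"

definition complete_dvr :: "'e::field set \<Rightarrow> bool" where
  "complete_dvr Ov \<longleftrightarrow> (\<exists>(v::'e \<Rightarrow> int) w.
     (\<forall>x y. x \<noteq> 0 \<longrightarrow> y \<noteq> 0 \<longrightarrow> v (x * y) = v x + v y) \<and>
     (\<forall>x y. x \<noteq> 0 \<longrightarrow> y \<noteq> 0 \<longrightarrow> x + y \<noteq> 0 \<longrightarrow> min (v x) (v y) \<le> v (x + y)) \<and>
     w \<noteq> 0 \<and> v w = 1 \<and>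
     Ov = {x. x = 0 \<or> 0 \<le> v x} \<and>
     (\<forall>s::nat \<Rightarrow> 'e. (\<forall>n. s n \<in> Ov) \<longrightarrow>
        (\<forall>k. \<exists>N. \<forall>m\<ge>N. \<forall>n\<ge>N. s m - s n \<in> O_mult Ov (w ^ k)) \<longrightarrow>
        (\<exists>x\<in>Ov. \<forall>k. \<exists>N. \<forall>n\<ge>N. s n - x \<in> O_mult Ov (w ^ k))))"

definition O_basis :: "'e::field set \<Rightarrow> ('e \<Rightarrow> 'v::ab_group_add \<Rightarrow> 'v) \<Rightarrow> nat \<Rightarrow> (nat \<Rightarrow> 'v) \<Rightarrow> 'v set \<Rightarrow> bool" where
  "O_basis Ov sc r b L \<longleftrightarrow> inj_on b {..<r} \<and> \<not> module.dependent sc (b ` {..<r}) \<and>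
     L = {(\<Sum>i<r. sc (c i) (b i)) | c. \<forall>i<r. c i \<in> Ov}"

definition full_O_lattice :: "'e::field set \<Rightarrow> ('e \<Rightarrow> 'v::ab_group_add \<Rightarrow> 'v) \<Rightarrow> 'v set \<Rightarrow> bool" where
  "full_O_lattice Ov sc L \<longleftrightarrow> (\<exists>r b. O_basis Ov sc r b L \<and> module.span sc (b ` {..<r}) = UNIV)"

definition ring_hom_fun :: "('e::comm_ring_1 \<Rightarrow> 'a::comm_ring_1) \<Rightarrow> bool" where
  "ring_hom_fun f \<longleftrightarrow> f 1 = 1 \<and> (\<forall>x y. f (x + y) = f x + f y) \<and> (\<forall>x y. f (x * y) = f x * f y)"

definition sub_ideal :: "'a::comm_ring_1 set \<Rightarrow> 'a set \<Rightarrow> bool" where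
  "sub_ideal T I \<longleftrightarrow> I \<subseteq> T \<and> 0 \<in> I \<and> (\<forall>x\<in>I. \<forall>y\<in>I. x + y \<in> I) \<and> (\<forall>x\<in>I. - x \<in> I) \<and>
     (\<forall>t\<in>T. \<forall>x\<in>I. t * x \<in> I)"

definition maximal_sub_ideal :: "'a::comm_ring_1 set \<Rightarrow> 'a set \<Rightarrow> bool" where
  "maximal_sub_ideal T I \<longleftrightarrow> sub_ideal T I \<and> I \<noteq> T \<and>
     (\<forall>J. sub_ideal T J \<longrightarrow> I \<subseteq> J \<longrightarrow> J = I \<or> J = T)"

definition reduced_finite_flat_local_algebra ::
  "'e::field set \<Rightarrow> ('e \<Rightarrow> 'a::comm_ring_1) \<Rightarrow> 'a set \<Rightarrow> bool" where
  "reduced_finite_flat_local_algebra Ov iota T \<longleftrightarrow>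
     ring_hom_fun iota \<and>
     1 \<in> T \<and> (\<forall>x\<in>T. \<forall>y\<in>T. x + y \<in> T \<and> x * y \<in> T) \<and> (\<forall>x\<in>T. - x \<in> T) \<and>
     (\<forall>c\<in>Ov. \<forall>t\<in>T. iota c * t \<in> T) \<and>
     full_O_lattice Ov (\<lambda>c x. iota c * x) T \<and>
     (\<forall>t\<in>T. \<forall>n. t ^ n = 0 \<longrightarrow> t = 0) \<and>
     (\<exists>!I. maximal_sub_ideal T I)"

definition O_algebra_hom_to_O ::
  "'e::field set \<Rightarrow> ('e \<Rightarrow> 'a::comm_ring_1) \<Rightarrow> 'a set \<Rightarrow> ('a \<Rightarrow> 'e) \<Rightarrow> bool" where
  "O_algebra_hom_to_O Ov iota T lam \<longleftrightarrow> (\<forall>t\<in>T. lam t \<in> Ov) \<and> lam 1 = 1 \<and>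
     (\<forall>x\<in>T. \<forall>y\<in>T. lam (x + y) = lam x + lam y \<and> lam (x * y) = lam x * lam y) \<and>
     (\<forall>c\<in>Ov. \<forall>t\<in>T. lam (iota c * t) = c * lam t)"

text \<open>e \<in> T \<otimes> E is the idempotent corresponding to (1,0) under T \<otimes> E \<cong> E \<times> T^c_E whose first
  projection is lam \<otimes> E: e is a nonzero idempotent and multiplication by e on T is
  (lam \<otimes> E) followed by E \<cong> E e, i.e. e t = (lam t) e.  (This determines e uniquely.)\<close>
definition lambda_idempotent ::
  "('e \<Rightarrow> 'a::comm_ring_1) \<Rightarrow> 'a set \<Rightarrow> ('a \<Rightarrow> 'e) \<Rightarrow> 'a \<Rightarrow> bool" where
  "lambda_idempotent iota T lam e \<longleftrightarrow> e * e = e \<and> e \<noteq> 0 \<and> (\<forall>t\<in>T. e * t = iota (lam t) * e)"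

definition lattice_module ::
  "'e::field set \<Rightarrow> ('e \<Rightarrow> 'a::comm_ring_1) \<Rightarrow> 'a set \<Rightarrow> ('a \<Rightarrow> 'v::ab_group_add \<Rightarrow> 'v) \<Rightarrow> 'v set \<Rightarrow> bool" where
  "lattice_module Ov iota T act M \<longleftrightarrow> Modules.module act \<and>
     full_O_lattice Ov (\<lambda>c m. act (iota c) m) M \<and> (\<forall>t\<in>T. \<forall>m\<in>M. act t m \<in> M)"

text \<open>Fitting ideal over Ov of the torsion module L/L', L' \<subseteq> L lattices of the same rank:
  with the presentation given by an Ov-basis b of L (generators) and an Ov-basis b' of L'
  (relations), Fitt_0 is generated by the determinant of the relation matrix.\<close>
definition fitting_ideal_quot ::
  "'e::field set \<Rightarrow> ('e \<Rightarrow> 'v::ab_group_add \<Rightarrow> 'v) \<Rightarrow> 'v set \<Rightarrow> 'v set \<Rightarrow> 'e set" where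
  "fitting_ideal_quot Ov sc L L' = {x. \<exists>r b b' A a. O_basis Ov sc r b L \<and> O_basis Ov sc r b' L' \<and>
      (\<forall>j<r. b' j = (\<Sum>i<r. sc (A i j) (b i))) \<and> a \<in> Ov \<and> x = a * det (mat r r (\<lambda>(i, j). A i j))}"

text \<open>C_0^lam(M) = eM / (eM \<inter> M), represented by the pair (eM, eM \<inter> M).\<close>
definition eM :: "('a \<Rightarrow> 'v \<Rightarrow> 'v) \<Rightarrow> 'a \<Rightarrow> 'v set \<Rightarrow> 'v set" where
  "eM act e M = act e ` M"

definition congruence_eta ::
  "'e::field set \<Rightarrow> ('e \<Rightarrow> 'a::comm_ring_1) \<Rightarrow> ('a \<Rightarrow> 'v::ab_group_add \<Rightarrow> 'v) \<Rightarrow> 'a \<Rightarrow> 'v set \<Rightarrow> 'e set" where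
  "congruence_eta Ov iota act e M =
     fitting_ideal_quot Ov (\<lambda>c m. act (iota c) m) (eM act e M) (eM act e M \<inter> M)"

definition ker_torsion :: "'a set \<Rightarrow> ('a \<Rightarrow> 'e::zero) \<Rightarrow> ('a \<Rightarrow> 'v \<Rightarrow> 'v::zero) \<Rightarrow> 'v set \<Rightarrow> 'v set" where
  "ker_torsion T lam act M = {m \<in> M. \<forall>t\<in>T. lam t = 0 \<longrightarrow> act t m = 0}"

definition E_bilinear :: "('e \<Rightarrow> 'v \<Rightarrow> 'v) \<Rightarrow> ('e \<Rightarrow> 'w \<Rightarrow> 'w) \<Rightarrow> ('v::ab_group_add \<Rightarrow> 'w::ab_group_add \<Rightarrow> 'e::field) \<Rightarrow> bool" where
  "E_bilinear sc1 sc2 P \<longleftrightarrow>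
     (\<forall>x x' y. P (x + x') y = P x y + P x' y) \<and> (\<forall>x y y'. P x (y + y') = P x y + P x y') \<and>
     (\<forall>c x y. P (sc1 c x) y = c * P x y) \<and> (\<forall>c x y. P x (sc2 c y) = c * P x y)"

definition O_linear_form :: "'e::field set \<Rightarrow> ('e \<Rightarrow> 'v \<Rightarrow> 'v) \<Rightarrow> 'v::ab_group_add set \<Rightarrow> ('v \<Rightarrow> 'e) \<Rightarrow> bool" where
  "O_linear_form Ov sc L f \<longleftrightarrow> (\<forall>y\<in>L. f y \<in> Ov) \<and>
     (\<forall>y\<in>L. \<forall>y'\<in>L. f (y + y') = f y + f y') \<and> (\<forall>a\<in>Ov. \<forall>y\<in>L. f (sc a y) = a * f y)"

definition perfect_O_pairing ::
  "'e::field set \<Rightarrow> ('e \<Rightarrow> 'v \<Rightarrow> 'v) \<Rightarrow> ('e \<Rightarrow> 'w \<Rightarrow> 'w) \<Rightarrow> 'v::ab_group_add set \<Rightarrow> 'w::ab_group_add set \<Rightarrow> ('v \<Rightarrow> 'w \<Rightarrow> 'e) \<Rightarrow> bool" where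
  "perfect_O_pairing Ov sc1 sc2 L1 L2 P \<longleftrightarrow>
     (\<forall>x\<in>L1. \<forall>y\<in>L2. P x y \<in> Ov) \<and>
     (\<forall>x\<in>L1. \<forall>x'\<in>L1. (\<forall>y\<in>L2. P x y = P x' y) \<longrightarrow> x = x') \<and>
     (\<forall>f. O_linear_form Ov sc2 L2 f \<longrightarrow> (\<exists>x\<in>L1. \<forall>y\<in>L2. P x y = f y)) \<and>
     (\<forall>y\<in>L2. \<forall>y'\<in>L2. (\<forall>x\<in>L1. P x y = P x y') \<longrightarrow> y = y') \<and>
     (\<forall>f. O_linear_form Ov sc1 L1 f \<longrightarrow> (\<exists>y\<in>L2. \<forall>x\<in>L1. P x y = f x))"

text \<open>Ov-linear maps L/L' \<rightarrow> E/Ov, represented by functions f : L \<rightarrow> E (values taken mod Ov).\<close>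
definition hom_quot_to_E_mod_O ::
  "'e::field set \<Rightarrow> ('e \<Rightarrow> 'v \<Rightarrow> 'v) \<Rightarrow> 'v::ab_group_add set \<Rightarrow> 'v set \<Rightarrow> ('v \<Rightarrow> 'e) \<Rightarrow> bool" where
  "hom_quot_to_E_mod_O Ov sc L L' f \<longleftrightarrow>
     (\<forall>y\<in>L. \<forall>y'\<in>L. f (y + y') - f y - f y' \<in> Ov) \<and>
     (\<forall>a\<in>Ov. \<forall>y\<in>L. f (sc a y) - a * f y \<in> Ov) \<and> (\<forall>y\<in>L'. f y \<in> Ov)"

definition perfect_E_mod_O_pairing ::
  "'e::field set \<Rightarrow> ('e \<Rightarrow> 'v \<Rightarrow> 'v) \<Rightarrow> ('e \<Rightarrow> 'w \<Rightarrow> 'w) \<Rightarrow>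
   'v::ab_group_add set \<Rightarrow> 'v set \<Rightarrow> 'w::ab_group_add set \<Rightarrow> 'w set \<Rightarrow> ('v \<Rightarrow> 'w \<Rightarrow> 'e) \<Rightarrow> bool" where
  "perfect_E_mod_O_pairing Ov sc1 sc2 L1 L1' L2 L2' P \<longleftrightarrow>
     (\<forall>x\<in>L1'. \<forall>y\<in>L2. P x y \<in> Ov) \<and> (\<forall>x\<in>L1. \<forall>y\<in>L2'. P x y \<in> Ov) \<and>
     (\<forall>x\<in>L1. (\<forall>y\<in>L2. P x y \<in> Ov) \<longrightarrow> x \<in> L1') \<and>
     (\<forall>f. hom_quot_to_E_mod_O Ov sc2 L2 L2' f \<longrightarrow> (\<exists>x\<in>L1. \<forall>y\<in>L2. P x y - f y \<in> Ov)) \<and>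
     (\<forall>y\<in>L2. (\<forall>x\<in>L1. P x y \<in> Ov) \<longrightarrow> y \<in> L2') \<and>
     (\<forall>f. hom_quot_to_E_mod_O Ov sc1 L1 L1' f \<longrightarrow> (\<exists>y\<in>L2. \<forall>x\<in>L1. P x y - f x \<in> Ov))"

end

theory Submission
  imports Defs
begin

locale dvr =
  fixes Ov :: "'e::field set" and v :: "'e \<Rightarrow> int" and w :: 'e
  assumes vmult: "\<And>x y. x \<noteq> 0 \<Longrightarrow> y \<noteq> 0 \<Longrightarrow> v (x * y) = v x + v y"
    and vultra: "\<And>x y. x \<noteq> 0 \<Longrightarrow> y \<noteq> 0 \<Longrightarrow> x + y \<noteq> 0 \<Longrightarrow> min (v x) (v y) \<le> v (x + y)"
    and w_nz: "w \<noteq> 0" and vw: "v w = 1"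
    and Ov_def: "Ov = {x. x = 0 \<or> 0 \<le> v x}"
begin

lemma v1: "v 1 = 0"
proof -
  have "v (1 * 1) = v 1 + v 1" by (rule vmult) simp_all
  then show ?thesis by simp
qed

lemma vm1: "v (-1) = 0"
proof -
  have "v ((-1) * (-1)) = v (-1) + v (-1)" by (rule vmult) simp_all
  then show ?thesis using v1 by simp
qed

lemma vneg: "v (- x) = v x"
proof (cases "x = 0")
  case False
  have "v ((-1) * x) = v (-1) + v x" by (rule vmult) (use False in simp_all)
  then show ?thesis using vm1 by simp
qed simp

lemma vinv: "x \<noteq> 0 \<Longrightarrow> v (inverse x) = - v x"
proof -
  assume x: "x \<noteq> 0"
  have "v (x * inverse x) = v x + v (inverse x)" by (rule vmult) (use x in simp_all)
  then show ?thesis using v1 x by simp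
qed

lemma O0[simp]: "0 \<in> Ov" and O1[simp]: "1 \<in> Ov"
  using v1 by (auto simp: Ov_def)

lemma Ow[simp]: "w \<in> Ov" using vw by (simp add: Ov_def)

lemma Oadd: "x \<in> Ov \<Longrightarrow> y \<in> Ov \<Longrightarrow> x + y \<in> Ov"
proof -
  assume "x \<in> Ov" "y \<in> Ov"
  then show ?thesis
  proof (cases "x = 0 \<or> y = 0 \<or> x + y = 0")
    case False
    then have "x \<noteq> 0" "y \<noteq> 0" "x + y \<noteq> 0" by simp_all
    then have "min (v x) (v y) \<le> v (x + y)" by (rule vultra)
    with False \<open>x \<in> Ov\<close> \<open>y \<in> Ov\<close> show ?thesis by (auto simp: Ov_def)
  qed auto
qed

lemma Omult: "x \<in> Ov \<Longrightarrow> y \<in> Ov \<Longrightarrow> x * y \<in> Ov"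
  by (cases "x = 0 \<or> y = 0") (auto simp: Ov_def vmult)

lemma Oneg: "x \<in> Ov \<Longrightarrow> - x \<in> Ov"
  using vneg[of x] by (auto simp: Ov_def)

lemma Odiff: "x \<in> Ov \<Longrightarrow> y \<in> Ov \<Longrightarrow> x - y \<in> Ov"
  unfolding diff_conv_add_uminus by (intro Oadd Oneg)

lemma Opow: "x \<in> Ov \<Longrightarrow> x ^ n \<in> Ov"
  by (induction n) (auto intro: Omult)

lemma Osum: "(\<And>i. i \<in> A \<Longrightarrow> f i \<in> Ov) \<Longrightarrow> sum f A \<in> Ov"
  by (induction A rule: infinite_finite_induct) (auto intro: Oadd)

lemma Oprod: "(\<And>i. i \<in> A \<Longrightarrow> f i \<in> Ov) \<Longrightarrow> prod f A \<in> Ov"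
  by (induction A rule: infinite_finite_induct) (auto intro: Omult)

lemma Oint: "of_int k \<in> Ov"
proof -
  have "of_nat n \<in> Ov" for n
    by (induction n) (auto intro: Oadd)
  then show ?thesis
    by (cases k rule: int_cases) (auto intro: Oneg simp del: of_nat_Suc)
qed

lemma vpow: "v (w ^ n) = int n"
proof (induction n)
  case (Suc n)
  have "v (w * w ^ n) = v w + v (w ^ n)" by (rule vmult) (use w_nz in simp_all)
  then show ?case using Suc vw by simp
qed (simp add: v1)

lemma scale_into_O: "\<exists>k. w ^ k * c \<in> Ov"
proof (cases "c = 0")
  case False
  let ?k = "nat (- v c)"
  have "v (w ^ ?k * c) = v (w ^ ?k) + v c" by (rule vmult) (use False w_nz in simp_all)
  then have "v (w ^ ?k * c) = int ?k + v c" by (simp only: vpow)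
  then have "0 \<le> v (w ^ ?k * c)" by simp
  then show ?thesis by (auto simp: Ov_def)
qed simp

lemma wpow_mult_O: "x \<in> Ov \<Longrightarrow> w ^ k * x \<in> Ov"
  by (intro Omult Opow Ow)

lemma scale_into_O_fin:
  assumes "finite A"
  shows "\<exists>k. \<forall>i\<in>A. w ^ k * f i \<in> Ov"
  using assms
proof (induction A rule: finite_induct)
  case empty then show ?case by simp
next
  case (insert a A)
  then obtain k where k: "\<forall>i\<in>A. w ^ k * f i \<in> Ov" by blast
  obtain j where j: "w ^ j * f a \<in> Ov" using scale_into_O by blast
  have "\<forall>i\<in>insert a A. w ^ (k + j) * f i \<in> Ov"
  proof
    fix i assume "i \<in> insert a A"
    then show "w ^ (k + j) * f i \<in> Ov"
    proof
      assume "i = a"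
      then show ?thesis using wpow_mult_O[OF j, of k] by (simp add: power_add mult.assoc)
    next
      assume "i \<in> A"
      then show ?thesis using wpow_mult_O[of "w ^ k * f i" j] k
        by (simp add: power_add mult.assoc mult.left_commute)
    qed
  qed
  then show ?case by blast
qed

lemma div_in_O:
  assumes "a \<noteq> 0" "b \<noteq> 0" "v b \<le> v a"
  shows "a / b \<in> Ov"
proof -
  have "v (a * inverse b) = v a + v (inverse b)" by (rule vmult) (use assms in simp_all)
  then have "v (a / b) = v a - v b"
    using vinv[of b] assms(2) by (simp add: divide_inverse)
  then show ?thesis using assms by (simp add: Ov_def)
qed

definition unit :: "'e \<Rightarrow> bool" where
  "unit a \<longleftrightarrow> a \<in> Ov \<and> a \<noteq> 0 \<and> inverse a \<in> Ov"

lemma unitI: "a \<in> Ov \<Longrightarrow> b \<in> Ov \<Longrightarrow> a * b = 1 \<Longrightarrow> unit a"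
  unfolding unit_def using inverse_unique[of a b] by auto

end


locale ovs = dvr Ov v w + vector_space scale
  for Ov :: "'e::field set" and v w and scale :: "'e \<Rightarrow> 'v::ab_group_add \<Rightarrow> 'v"
begin

definition indep :: "nat \<Rightarrow> (nat \<Rightarrow> 'v) \<Rightarrow> bool" where
  "indep n b \<longleftrightarrow> (\<forall>c. (\<Sum>i<n. scale (c i) (b i)) = 0 \<longrightarrow> (\<forall>i<n. c i = 0))"

definition spanE :: "nat \<Rightarrow> (nat \<Rightarrow> 'v) \<Rightarrow> 'v set" where
  "spanE n b = {(\<Sum>i<n. scale (c i) (b i)) | c. True}"

definition spanO :: "nat \<Rightarrow> (nat \<Rightarrow> 'v) \<Rightarrow> 'v set" where
  "spanO n b = {(\<Sum>i<n. scale (c i) (b i)) | c. \<forall>i<n. c i \<in> Ov}"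

definition crd :: "nat \<Rightarrow> (nat \<Rightarrow> 'v) \<Rightarrow> nat \<Rightarrow> 'v \<Rightarrow> 'e" where
  "crd n b i x = (THE a. \<exists>c. x = (\<Sum>j<n. scale (c j) (b j)) \<and> c i = a)"

lemma spanE_I: "x = (\<Sum>i<n. scale (c i) (b i)) \<Longrightarrow> x \<in> spanE n b"
  unfolding spanE_def by blast

lemma spanO_I: "x = (\<Sum>i<n. scale (c i) (b i)) \<Longrightarrow> (\<And>i. i < n \<Longrightarrow> c i \<in> Ov) \<Longrightarrow> x \<in> spanO n b"
  unfolding spanO_def by blast

lemma indepD: "indep n b \<Longrightarrow> (\<Sum>i<n. scale (c i) (b i)) = 0 \<Longrightarrow> i < n \<Longrightarrow> c i = 0"
  unfolding indep_def by blast

lemma sum_scale_diff: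
  "(\<Sum>i<n. scale (c i) (b i)) - (\<Sum>i<n. scale (c' i) (b i)) = (\<Sum>i<n. scale (c i - c' i) (b i))"
  by (simp add: sum_subtractf scale_left_diff_distrib)

lemma sum_scale_add:
  "(\<Sum>i<n. scale (c i) (b i)) + (\<Sum>i<n. scale (c' i) (b i)) = (\<Sum>i<n. scale (c i + c' i) (b i))"
  by (simp add: sum.distrib scale_left_distrib)

lemma sum_scale_scale:
  "scale a (\<Sum>i<n. scale (c i) (b i)) = (\<Sum>i<n. scale (a * c i) (b i))"
  by (simp add: scale_sum_right)

lemma indep_unique:
  assumes "indep n b" "(\<Sum>i<n. scale (c i) (b i)) = (\<Sum>i<n. scale (c' i) (b i))" "i < n"
  shows "c i = c' i"
proof -
  have "(\<Sum>i<n. scale (c i - c' i) (b i)) = 0"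
    using assms(2) sum_scale_diff[of c b n c'] by simp
  moreover from assms(1) have "(\<Sum>i<n. scale ((\<lambda>i. c i - c' i) i) (b i)) = 0 \<longrightarrow> (\<forall>i<n. (\<lambda>i. c i - c' i) i = 0)"
    unfolding indep_def by (rule spec)
  ultimately have "c i - c' i = 0" using assms(3) by simp
  then show ?thesis by simp
qed

lemma crd_eq:
  assumes "indep n b" "i < n"
  shows "crd n b i (\<Sum>j<n. scale (c j) (b j)) = c i"
  unfolding crd_def
proof (rule the_equality)
  show "\<exists>c'. (\<Sum>j<n. scale (c j) (b j)) = (\<Sum>j<n. scale (c' j) (b j)) \<and> c' i = c i" by blast
next
  fix a assume "\<exists>c'. (\<Sum>j<n. scale (c j) (b j)) = (\<Sum>j<n. scale (c' j) (b j)) \<and> c' i = a"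
  then obtain c' where "(\<Sum>j<n. scale (c j) (b j)) = (\<Sum>j<n. scale (c' j) (b j))" "c' i = a" by blast
  then show "a = c i" using indep_unique[OF assms(1) _ assms(2)] by metis
qed

lemma spanE_repr:
  assumes "indep n b" "x \<in> spanE n b"
  shows "x = (\<Sum>j<n. scale (crd n b j x) (b j))"
proof -
  obtain c where x: "x = (\<Sum>j<n. scale (c j) (b j))" using assms(2) unfolding spanE_def by blast
  have "(\<Sum>j<n. scale (crd n b j x) (b j)) = (\<Sum>j<n. scale (c j) (b j))"
    by (rule sum.cong) (use crd_eq[OF assms(1)] x in auto)
  then show ?thesis using x by simp
qed

lemma spanO_sub_spanE: "spanO n b \<subseteq> spanE n b"
  unfolding spanO_def spanE_def by blast

lemma spanE_add: "x \<in> spanE n b \<Longrightarrow> y \<in> spanE n b \<Longrightarrow> x + y \<in> spanE n b"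
proof -
  assume "x \<in> spanE n b" "y \<in> spanE n b"
  then obtain c c' where "x = (\<Sum>i<n. scale (c i) (b i))" "y = (\<Sum>i<n. scale (c' i) (b i))"
    unfolding spanE_def by blast
  then show ?thesis using sum_scale_add[of c b n c'] by (intro spanE_I[where c="\<lambda>i. c i + c' i"]) simp
qed

lemma spanE_scale: "x \<in> spanE n b \<Longrightarrow> scale a x \<in> spanE n b"
proof -
  assume "x \<in> spanE n b"
  then obtain c where "x = (\<Sum>i<n. scale (c i) (b i))"
    unfolding spanE_def by blast
  then show ?thesis using sum_scale_scale[of a c b n] by (intro spanE_I[where c="\<lambda>i. a * c i"]) simp
qed

lemma spanE_zero: "0 \<in> spanE n b"
proof -
  show ?thesis by (rule spanE_I[where c="\<lambda>_. 0"]) simp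
qed

lemma spanO_zero: "0 \<in> spanO n b"
proof -
  show ?thesis by (rule spanO_I[where c="\<lambda>_. 0"]) simp_all
qed

lemma spanO_add: "x \<in> spanO n b \<Longrightarrow> y \<in> spanO n b \<Longrightarrow> x + y \<in> spanO n b"
proof -
  assume "x \<in> spanO n b" "y \<in> spanO n b"
  then obtain c c' where "x = (\<Sum>i<n. scale (c i) (b i))" "\<forall>i<n. c i \<in> Ov"
    "y = (\<Sum>i<n. scale (c' i) (b i))" "\<forall>i<n. c' i \<in> Ov" unfolding spanO_def by blast
  then show ?thesis using sum_scale_add[of c b n c'] Oadd
    by (intro spanO_I[where c="\<lambda>i. c i + c' i"]) auto
qed

lemma spanO_scale: "a \<in> Ov \<Longrightarrow> x \<in> spanO n b \<Longrightarrow> scale a x \<in> spanO n b"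
proof -
  assume a: "a \<in> Ov" and "x \<in> spanO n b"
  then obtain c where "x = (\<Sum>i<n. scale (c i) (b i))" "\<forall>i<n. c i \<in> Ov" unfolding spanO_def by blast
  then show ?thesis using sum_scale_scale[of a c b n] Omult[OF a]
    by (intro spanO_I[where c="\<lambda>i. a * c i"]) auto
qed

lemma spanO_neg: "x \<in> spanO n b \<Longrightarrow> - x \<in> spanO n b"
  using spanO_scale[of "-1" x n b] Oneg[OF O1] by simp

lemma crd_add:
  assumes "indep n b" "i < n" "x \<in> spanE n b" "y \<in> spanE n b"
  shows "crd n b i (x + y) = crd n b i x + crd n b i y"
proof -
  obtain c c' where "x = (\<Sum>i<n. scale (c i) (b i))" "y = (\<Sum>i<n. scale (c' i) (b i))"
    using assms(3,4) unfolding spanE_def by blast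
  then show ?thesis using sum_scale_add[of c b n c'] crd_eq[OF assms(1,2)] by simp
qed

lemma crd_scale:
  assumes "indep n b" "i < n" "x \<in> spanE n b"
  shows "crd n b i (scale a x) = a * crd n b i x"
proof -
  obtain c where "x = (\<Sum>i<n. scale (c i) (b i))"
    using assms(3) unfolding spanE_def by blast
  then show ?thesis using sum_scale_scale[of a c b n] crd_eq[OF assms(1,2)] by simp
qed

lemma crd_O:
  assumes "indep n b" "i < n" "x \<in> spanO n b"
  shows "crd n b i x \<in> Ov"
proof -
  obtain c where "x = (\<Sum>i<n. scale (c i) (b i))" "\<forall>i<n. c i \<in> Ov"
    using assms(3) unfolding spanO_def by blast
  then show ?thesis using crd_eq[OF assms(1,2)] assms(2) by simp
qed

lemma spanO_iff:
  assumes "indep n b"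
  shows "x \<in> spanO n b \<longleftrightarrow> x \<in> spanE n b \<and> (\<forall>i<n. crd n b i x \<in> Ov)"
proof
  assume "x \<in> spanO n b"
  then show "x \<in> spanE n b \<and> (\<forall>i<n. crd n b i x \<in> Ov)"
    using spanO_sub_spanE crd_O[OF assms] by blast
next
  assume "x \<in> spanE n b \<and> (\<forall>i<n. crd n b i x \<in> Ov)"
  then show "x \<in> spanO n b"
    using spanE_repr[OF assms] by (intro spanO_I[where c="\<lambda>j. crd n b j x"]) auto
qed

lemma basis_in_spanO:
  assumes "i < n"
  shows "b i \<in> spanO n b"
proof -
  have "(\<Sum>j<n. scale (if j = i then 1 else 0) (b j)) = (\<Sum>j<n. if j = i then b j else 0)"
    by (rule sum.cong) auto
  also have "\<dots> = b i" using assms by (simp add: sum.delta)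
  finally show ?thesis by (intro spanO_I[where c="\<lambda>j. if j = i then 1 else 0"]) auto
qed

lemma crd_basis:
  assumes "indep n b" "i < n" "k < n"
  shows "crd n b k (b i) = (if k = i then 1 else 0)"
proof -
  have "(\<Sum>j<n. scale (if j = i then 1 else 0) (b j)) = (\<Sum>j<n. if j = i then b j else 0)"
    by (rule sum.cong) auto
  also have "\<dots> = b i" using assms by (simp add: sum.delta)
  finally have "b i = (\<Sum>j<n. scale ((\<lambda>j. if j = i then 1 else 0) j) (b j))" by simp
  then show ?thesis using crd_eq[OF assms(1,3), of "\<lambda>j. if j = i then 1 else 0"] by simp
qed

lemma spanE_sum:
  assumes "finite A" "\<And>j. j \<in> A \<Longrightarrow> x j \<in> spanE n b"
  shows "(\<Sum>j\<in>A. scale (a j) (x j)) \<in> spanE n b"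
  using assms by (induction A rule: finite_induct) (auto intro: spanE_add spanE_scale spanE_zero)

lemma crd_sum:
  assumes "indep n b" "i < n" "finite A" "\<And>j. j \<in> A \<Longrightarrow> x j \<in> spanE n b"
  shows "crd n b i (\<Sum>j\<in>A. scale (a j) (x j)) = (\<Sum>j\<in>A. a j * crd n b i (x j))"
  using assms(3,4)
proof (induction A rule: finite_induct)
  case empty
  have "crd n b i 0 = crd n b i (\<Sum>j<n. scale ((\<lambda>_. 0) j) (b j))" by simp
  also have "\<dots> = 0" using crd_eq[OF assms(1,2), of "\<lambda>_. 0"] by simp
  finally show ?case by simp
next
  case (insert a' A)
  have "crd n b i (\<Sum>j\<in>insert a' A. scale (a j) (x j))
      = crd n b i (scale (a a') (x a') + (\<Sum>j\<in>A. scale (a j) (x j)))"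
    using insert.hyps by simp
  also have "\<dots> = crd n b i (scale (a a') (x a')) + crd n b i (\<Sum>j\<in>A. scale (a j) (x j))"
    by (rule crd_add[OF assms(1,2)]) (use insert in \<open>auto intro: spanE_scale spanE_sum\<close>)
  also have "\<dots> = a a' * crd n b i (x a') + (\<Sum>j\<in>A. a j * crd n b i (x j))"
    using insert crd_scale[OF assms(1,2)] by simp
  finally show ?case using insert.hyps by simp
qed

lemma indep_iff: "indep n b \<longleftrightarrow> inj_on b {..<n} \<and> independent (b ` {..<n})"
proof
  assume ind: "indep n b"
  have inj: "inj_on b {..<n}"
  proof (rule inj_onI)
    fix i j assume ij: "i \<in> {..<n}" "j \<in> {..<n}" "b i = b j"
    show "i = j"
    proof (rule ccontr)
      assume "i \<noteq> j"
      have "crd n b i (b i) = 1" using crd_basis[OF ind, of i i] ij by simp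
      moreover have "crd n b i (b j) = 0" using crd_basis[OF ind, of j i] ij \<open>i \<noteq> j\<close> by simp
      ultimately show False using ij by simp
    qed
  qed
  moreover have "independent (b ` {..<n})"
  proof
    assume "dependent (b ` {..<n})"
    then obtain u where u: "\<exists>x\<in>b ` {..<n}. u x \<noteq> 0" "(\<Sum>x\<in>b ` {..<n}. scale (u x) x) = 0"
      using dependent_finite[of "b ` {..<n}"] by auto
    have "(\<Sum>i<n. scale (u (b i)) (b i)) = 0"
      using u(2) sum.reindex[OF inj, of "\<lambda>x. scale (u x) x"] by simp
    then have "\<forall>i<n. u (b i) = 0" using indepD[OF ind, where c="\<lambda>i. u (b i)"] by blast
    then show False using u(1) by auto
  qed
  ultimately show "inj_on b {..<n} \<and> independent (b ` {..<n})" by blast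
next
  assume a: "inj_on b {..<n} \<and> independent (b ` {..<n})"
  show "indep n b" unfolding indep_def
  proof (rule allI, rule impI)
    fix c assume c: "(\<Sum>i<n. scale (c i) (b i)) = 0"
    let ?u = "\<lambda>x. c (the_inv_into {..<n} b x)"
    have "(\<Sum>x\<in>b ` {..<n}. scale (?u x) x) = (\<Sum>i<n. scale (?u (b i)) (b i))"
      using sum.reindex[of b "{..<n}" "\<lambda>x. scale (?u x) x"] a by simp
    also have "\<dots> = (\<Sum>i<n. scale (c i) (b i))"
    proof (rule sum.cong)
      fix i assume "i \<in> {..<n}"
      then have "the_inv_into {..<n} b (b i) = i" using a the_inv_into_f_f by metis
      then show "scale (?u (b i)) (b i) = scale (c i) (b i)" by simp
    qed simp
    finally have "(\<Sum>x\<in>b ` {..<n}. scale (?u x) x) = 0" using c by simp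
    then have "\<forall>x\<in>b ` {..<n}. ?u x = 0"
      using a independentD[of "b ` {..<n}" "b ` {..<n}" ?u] by blast
    show "\<forall>i<n. c i = 0"
    proof (intro allI impI)
      fix i assume "i < n"
      then have "the_inv_into {..<n} b (b i) = i" using a the_inv_into_f_f by (metis lessThan_iff)
      then show "c i = 0" using \<open>\<forall>x\<in>b ` {..<n}. ?u x = 0\<close> \<open>i < n\<close> by force
    qed
  qed
qed

lemma O_basis_iff: "O_basis Ov scale r b L \<longleftrightarrow> indep r b \<and> L = spanO r b"
  unfolding O_basis_def indep_iff spanO_def by (simp only: conj_assoc)

lemma spanE_sub_span: "spanE n b \<subseteq> span (b ` {..<n})"
proof
  fix x assume "x \<in> spanE n b"
  then obtain c where x: "x = (\<Sum>i<n. scale (c i) (b i))" unfolding spanE_def by blast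
  have "(\<Sum>i<n. scale (c i) (b i)) \<in> span (b ` {..<n})"
    by (rule span_sum, rule span_scale, rule span_base) auto
  then show "x \<in> span (b ` {..<n})" using x by simp
qed

lemma span_sub_spanE:
  assumes "inj_on b {..<n}"
  shows "span (b ` {..<n}) \<subseteq> spanE n b"
proof
  fix x assume "x \<in> span (b ` {..<n})"
  then obtain u where u: "(\<Sum>y\<in>b ` {..<n}. scale (u y) y) = x"
    using span_finite[of "b ` {..<n}"] by auto
  have "x = (\<Sum>i<n. scale (u (b i)) (b i))"
    using u sum.reindex[OF assms, of "\<lambda>y. scale (u y) y"] by simp
  then show "x \<in> spanE n b" by (rule spanE_I)
qed

lemma indep_le:
  assumes "indep r y" "\<And>i. i < r \<Longrightarrow> y i \<in> spanE s c"
  shows "r \<le> s"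
proof -
  have inj: "inj_on y {..<r}" and ind: "independent (y ` {..<r})" using assms(1) indep_iff by auto
  have "y ` {..<r} \<subseteq> span (c ` {..<s})" using assms(2) spanE_sub_span by blast
  then have "card (y ` {..<r}) \<le> card (c ` {..<s})"
    using independent_span_bound[of "c ` {..<s}" "y ` {..<r}"] ind by simp
  also have "\<dots> \<le> s" using card_image_le[of "{..<s}" c] by simp
  finally show ?thesis using card_image[OF inj] by simp
qed

end


context ovs
begin

lemma indep_Suc_D:
  assumes "indep (Suc n) b" shows "indep n b"
  unfolding indep_def
proof (rule allI, rule impI)
  fix c assume c: "(\<Sum>i<n. scale (c i) (b i)) = 0"
  let ?c = "\<lambda>i. if i < n then c i else 0"
  have "(\<Sum>i<Suc n. scale (?c i) (b i)) = (\<Sum>i<n. scale (?c i) (b i))" by simp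
  also have "\<dots> = (\<Sum>i<n. scale (c i) (b i))" by (rule sum.cong) auto
  finally have s0: "(\<Sum>i<Suc n. scale (?c i) (b i)) = 0" using c by simp
  show "\<forall>i<n. c i = 0"
  proof (intro allI impI)
    fix i assume i: "i < n"
    have "?c i = 0" by (rule indepD[OF assms s0]) (use i in simp)
    then show "c i = 0" using i by simp
  qed
qed

lemma lattice_basis:
  assumes "indep n b" "L \<subseteq> spanO n b" "0 \<in> L" "\<And>x y. x \<in> L \<Longrightarrow> y \<in> L \<Longrightarrow> x + y \<in> L"
    "\<And>a x. a \<in> Ov \<Longrightarrow> x \<in> L \<Longrightarrow> scale a x \<in> L"
  shows "\<exists>r d. indep r d \<and> L = spanO r d"
  using assms
proof (induction n arbitrary: L)
  case 0
  have s0: "spanO 0 b = {0}" unfolding spanO_def by auto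
  then have "L = {0}" using "0.prems"(2,3) by auto
  moreover have "indep 0 b" unfolding indep_def by simp
  ultimately show ?case using s0 by blast
next
  case (Suc n)
  note ind = Suc.prems(1)
  have indn: "indep n b" by (rule indep_Suc_D[OF ind])
  define \<kappa> where "\<kappa> = crd (Suc n) b n"
  have LE: "\<And>x. x \<in> L \<Longrightarrow> x \<in> spanE (Suc n) b" using Suc.prems(2) spanO_sub_spanE by blast
  have kadd: "\<And>x y. x \<in> L \<Longrightarrow> y \<in> L \<Longrightarrow> \<kappa> (x + y) = \<kappa> x + \<kappa> y"
    unfolding \<kappa>_def by (rule crd_add[OF ind]) (auto intro: LE)
  have kscale: "\<And>a x. x \<in> L \<Longrightarrow> \<kappa> (scale a x) = a * \<kappa> x"
    unfolding \<kappa>_def by (rule crd_scale[OF ind]) (auto intro: LE)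
  have kO: "\<And>x. x \<in> L \<Longrightarrow> \<kappa> x \<in> Ov"
    unfolding \<kappa>_def using crd_O[OF ind] Suc.prems(2) by blast
  have k0: "\<kappa> 0 = 0" using kscale[of 0 0] Suc.prems(3) by simp
  define L0 where "L0 = {x\<in>L. \<kappa> x = 0}"
  have L0sub: "L0 \<subseteq> spanO n b"
  proof
    fix x assume "x \<in> L0"
    then have x: "x \<in> L" "\<kappa> x = 0" unfolding L0_def by auto
    then obtain c where c: "x = (\<Sum>i<Suc n. scale (c i) (b i))" "\<forall>i<Suc n. c i \<in> Ov"
      using Suc.prems(2) unfolding spanO_def by blast
    have "c n = 0" using x(2) crd_eq[OF ind, of n c] c(1) unfolding \<kappa>_def by simp
    then have "x = (\<Sum>i<n. scale (c i) (b i))" using c(1) by simp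
    then show "x \<in> spanO n b" by (rule spanO_I) (use c(2) in auto)
  qed
  have "\<exists>r d. indep r d \<and> L0 = spanO r d"
  proof (rule Suc.IH[OF indn L0sub])
    show "0 \<in> L0" unfolding L0_def using Suc.prems(3) k0 by simp
    show "\<And>x y. x \<in> L0 \<Longrightarrow> y \<in> L0 \<Longrightarrow> x + y \<in> L0"
      unfolding L0_def using Suc.prems(4) kadd by auto
    show "\<And>a x. a \<in> Ov \<Longrightarrow> x \<in> L0 \<Longrightarrow> scale a x \<in> L0"
      unfolding L0_def using Suc.prems(5) kscale by auto
  qed
  then obtain r d where rd: "indep r d" "L0 = spanO r d" by blast
  show ?case
  proof (cases "\<exists>x\<in>L. \<kappa> x \<noteq> 0")
    case False
    then have "L = L0" unfolding L0_def by auto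
    then show ?thesis using rd by blast
  next
    case True
    then obtain x0 where x0: "x0 \<in> L \<and> \<kappa> x0 \<noteq> 0"
      and mn: "\<And>y. y \<in> L \<and> \<kappa> y \<noteq> 0 \<Longrightarrow> nat (v (\<kappa> x0)) \<le> nat (v (\<kappa> y))"
      using ex_has_least_nat[of "\<lambda>x. x \<in> L \<and> \<kappa> x \<noteq> 0" _ "\<lambda>x. nat (v (\<kappa> x))"] by blast
    have vge: "\<And>y. y \<in> L \<Longrightarrow> \<kappa> y \<noteq> 0 \<Longrightarrow> 0 \<le> v (\<kappa> y)"
      using kO unfolding Ov_def by blast
    have qO: "\<And>x. x \<in> L \<Longrightarrow> \<kappa> x / \<kappa> x0 \<in> Ov"
    proof -
      fix x assume xL: "x \<in> L"
      show "\<kappa> x / \<kappa> x0 \<in> Ov"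
      proof (cases "\<kappa> x = 0")
        case False
        have "nat (v (\<kappa> x0)) \<le> nat (v (\<kappa> x))" using mn xL False by blast
        moreover have "0 \<le> v (\<kappa> x0)" "0 \<le> v (\<kappa> x)" using vge xL False x0 by auto
        ultimately have "v (\<kappa> x0) \<le> v (\<kappa> x)" by linarith
        then show ?thesis using div_in_O False x0 by blast
      qed simp
    qed
    define d' where "d' = (\<lambda>i. if i < r then d i else x0)"
    have sumd': "\<And>c. (\<Sum>i<Suc r. scale (c i) (d' i)) = (\<Sum>i<r. scale (c i) (d i)) + scale (c r) x0"
    proof -
      fix c
      have "(\<Sum>i<Suc r. scale (c i) (d' i)) = (\<Sum>i<r. scale (c i) (d' i)) + scale (c r) x0"
        by (simp add: d'_def)
      also have "(\<Sum>i<r. scale (c i) (d' i)) = (\<Sum>i<r. scale (c i) (d i))"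
        by (rule sum.cong) (auto simp: d'_def)
      finally show "(\<Sum>i<Suc r. scale (c i) (d' i)) = (\<Sum>i<r. scale (c i) (d i)) + scale (c r) x0" .
    qed
    have dL0: "\<And>i. i < r \<Longrightarrow> d i \<in> L0" using basis_in_spanO rd(2) by blast
    have dL: "\<And>i. i < r \<Longrightarrow> d i \<in> L" using dL0 unfolding L0_def by blast
    have S0: "\<And>c. \<kappa> (\<Sum>i<r. scale (c i) (d i)) = 0"
    proof -
      fix c
      have "\<kappa> (\<Sum>i<r. scale (c i) (d i)) = (\<Sum>i<r. c i * \<kappa> (d i))"
        unfolding \<kappa>_def by (rule crd_sum[OF ind]) (auto intro: LE dL)
      also have "\<dots> = 0" using dL0 unfolding L0_def by simp
      finally show "\<kappa> (\<Sum>i<r. scale (c i) (d i)) = 0" .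
    qed
    have SL: "\<And>c. (\<forall>i<r. c i \<in> Ov) \<Longrightarrow> (\<Sum>i<r. scale (c i) (d i)) \<in> L"
    proof -
      fix c assume "\<forall>i<r. c i \<in> Ov"
      then have "(\<Sum>i<r. scale (c i) (d i)) \<in> spanO r d" by (intro spanO_I[where c=c]) auto
      then show "(\<Sum>i<r. scale (c i) (d i)) \<in> L" using rd(2) unfolding L0_def by blast
    qed
    have SE: "\<And>c. (\<Sum>i<r. scale (c i) (d i)) \<in> spanE (Suc n) b"
      by (rule spanE_sum) (auto intro: LE dL)
    have ind': "indep (Suc r) d'"
      unfolding indep_def
    proof (rule allI, rule impI)
      fix c assume c: "(\<Sum>i<Suc r. scale (c i) (d' i)) = 0"
      then have c': "(\<Sum>i<r. scale (c i) (d i)) + scale (c r) x0 = 0" using sumd' by simp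
      have "\<kappa> ((\<Sum>i<r. scale (c i) (d i)) + scale (c r) x0)
          = \<kappa> (\<Sum>i<r. scale (c i) (d i)) + \<kappa> (scale (c r) x0)"
        unfolding \<kappa>_def by (rule crd_add[OF ind]) (auto intro: SE spanE_scale LE x0[THEN conjunct1])
      also have "\<dots> = c r * \<kappa> x0" using S0 kscale x0 by simp
      finally have "c r * \<kappa> x0 = 0" using c' k0 by simp
      then have cr: "c r = 0" using x0 by simp
      then have "(\<Sum>i<r. scale (c i) (d i)) = 0" using c' by simp
      then have "\<forall>i<r. c i = 0" using indepD[OF rd(1)] by blast
      then show "\<forall>i<Suc r. c i = 0" using cr less_Suc_eq by auto
    qed
    have "L = spanO (Suc r) d'"
    proof
      show "L \<subseteq> spanO (Suc r) d'"
      proof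
        fix x assume xL: "x \<in> L"
        define q where "q = \<kappa> x / \<kappa> x0"
        have qO': "q \<in> Ov" unfolding q_def using qO xL .
        have mq: "- q \<in> Ov" using Oneg qO' by blast
        have x'L: "x + scale (- q) x0 \<in> L" using Suc.prems(4,5) xL x0 mq by blast
        have sL: "scale (- q) x0 \<in> L" using Suc.prems(5)[OF mq] x0 by blast
        have e1: "\<kappa> (x + scale (- q) x0) = \<kappa> x + \<kappa> (scale (- q) x0)" by (rule kadd[OF xL sL])
        have e2: "\<kappa> (scale (- q) x0) = (- q) * \<kappa> x0" by (rule kscale) (use x0 in blast)
        have e3: "\<kappa> x + (- q) * \<kappa> x0 = 0" using x0 by (simp add: q_def)
        from e1 e2 e3 have "\<kappa> (x + scale (- q) x0) = 0" by simp
        then have "x + scale (- q) x0 \<in> L0" using x'L unfolding L0_def by blast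
        then obtain c where c: "x + scale (- q) x0 = (\<Sum>i<r. scale (c i) (d i))" "\<forall>i<r. c i \<in> Ov"
          using rd(2) unfolding spanO_def by blast
        let ?c = "\<lambda>i. if i < r then c i else q"
        have "(\<Sum>i<Suc r. scale (?c i) (d' i)) = (\<Sum>i<r. scale (?c i) (d i)) + scale q x0"
          using sumd'[of ?c] by simp
        also have "(\<Sum>i<r. scale (?c i) (d i)) = (\<Sum>i<r. scale (c i) (d i))"
          by (rule sum.cong) auto
        also have "\<dots> + scale q x0 = x" using c(1) by (simp add: algebra_simps)
        finally have "x = (\<Sum>i<Suc r. scale (?c i) (d' i))" by simp
        then show "x \<in> spanO (Suc r) d'"
          by (rule spanO_I) (use c(2) qO' less_Suc_eq in auto)
      qed
    next
      show "spanO (Suc r) d' \<subseteq> L"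
      proof
        fix y assume "y \<in> spanO (Suc r) d'"
        then obtain c where c: "y = (\<Sum>i<Suc r. scale (c i) (d' i))" "\<forall>i<Suc r. c i \<in> Ov"
          unfolding spanO_def by blast
        have "y = (\<Sum>i<r. scale (c i) (d i)) + scale (c r) x0" using c(1) sumd' by simp
        moreover have "(\<Sum>i<r. scale (c i) (d i)) \<in> L" using SL c(2) by simp
        moreover have "scale (c r) x0 \<in> L" using Suc.prems(5) c(2) x0 by simp
        ultimately show "y \<in> L" using Suc.prems(4) by simp
      qed
    qed
    then show ?thesis using ind' by blast
  qed
qed

end


locale pset = V1: ovs Ov v w sc1 + V2: ovs Ov v w sc2
  for Ov :: "'e::field set" and v w and sc1 :: "'e \<Rightarrow> 'v::ab_group_add \<Rightarrow> 'v"
    and sc2 :: "'e \<Rightarrow> 'w::ab_group_add \<Rightarrow> 'w" +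
  fixes M1 :: "'v set" and M2 :: "'w set" and P :: "'v \<Rightarrow> 'w \<Rightarrow> 'e"
    and E1 :: "'v \<Rightarrow> 'v" and E2 :: "'w \<Rightarrow> 'w"
    and n1 m1 n2 m2
  assumes M1: "V1.indep n1 m1" "M1 = V1.spanO n1 m1" "V1.spanE n1 m1 = UNIV"
    and M2: "V2.indep n2 m2" "M2 = V2.spanO n2 m2" "V2.spanE n2 m2 = UNIV"
    and E1add: "\<And>x y. E1 (x + y) = E1 x + E1 y"
    and E1sc: "\<And>c x. E1 (sc1 c x) = sc1 c (E1 x)"
    and E1idem: "\<And>x. E1 (E1 x) = E1 x"
    and E1bd: "\<exists>k. \<forall>m\<in>M1. sc1 (w ^ k) (E1 m) \<in> M1"
    and E2add: "\<And>x y. E2 (x + y) = E2 x + E2 y"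
    and E2sc: "\<And>c x. E2 (sc2 c x) = sc2 c (E2 x)"
    and E2idem: "\<And>x. E2 (E2 x) = E2 x"
    and E2bd: "\<exists>k. \<forall>m\<in>M2. sc2 (w ^ k) (E2 m) \<in> M2"
    and Pbil: "E_bilinear sc1 sc2 P"
    and Pperf: "perfect_O_pairing Ov sc1 sc2 M1 M2 P"
    and orth1: "\<forall>x\<in>M1. \<forall>y\<in>M2. P (E1 x) (y - E2 y) = 0"
    and orth2: "\<forall>x\<in>M1. \<forall>y\<in>M2. P (x - E1 x) (E2 y) = 0"
begin

lemma swap: "pset Ov v w sc2 sc1 M2 M1 (\<lambda>y x. P x y) E2 E1 n2 m2 n1 m1"
proof -
  have b: "E_bilinear sc2 sc1 (\<lambda>y x. P x y)" using Pbil unfolding E_bilinear_def by auto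
  have p: "perfect_O_pairing Ov sc2 sc1 M2 M1 (\<lambda>y x. P x y)" using Pperf unfolding perfect_O_pairing_def by auto
  show ?thesis
    by (rule pset.intro, unfold_locales) (use M1 M2 E1add E1sc E1idem E1bd E2add E2sc E2idem E2bd b p orth1 orth2 in auto)
qed

lemma Padd1: "P (x + x') y = P x y + P x' y" using Pbil unfolding E_bilinear_def by blast
lemma Padd2: "P x (y + y') = P x y + P x y'" using Pbil unfolding E_bilinear_def by blast
lemma Psc1: "P (sc1 c x) y = c * P x y" using Pbil unfolding E_bilinear_def by blast
lemma Psc2: "P x (sc2 c y) = c * P x y" using Pbil unfolding E_bilinear_def by blast

lemma P0_1: "P 0 y = 0" using Psc1[of 0 x y for x] by simp
lemma P0_2: "P x 0 = 0" using Psc2[of x 0 y for y] by simp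

lemma Pdiff1: "P (x - x') y = P x y - P x' y"
proof -
  have "P (x - x') y + P x' y = P x y" using Padd1[of "x - x'" x' y] by simp
  then show ?thesis by (simp add: eq_diff_eq)
qed

lemma Pdiff2: "P x (y - y') = P x y - P x y'"
proof -
  have "P x (y - y') + P x y' = P x y" using Padd2[of x "y - y'" y'] by simp
  then show ?thesis by (simp add: eq_diff_eq)
qed

lemma Psum1: "P (\<Sum>k\<in>A. sc1 (a k) (x k)) y = (\<Sum>k\<in>A. a k * P (x k) y)"
  by (induction A rule: infinite_finite_induct) (simp_all add: P0_1 Padd1 Psc1)

lemma Psum2: "P x (\<Sum>k\<in>A. sc2 (a k) (y k)) = (\<Sum>k\<in>A. a k * P x (y k))"
  by (induction A rule: infinite_finite_induct) (simp_all add: P0_2 Padd2 Psc2)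

lemma E1_0: "E1 0 = 0" using E1sc[of 0 0] by simp
lemma E2_0: "E2 0 = 0" using E2sc[of 0 0] by simp
lemma E1diff: "E1 (x - y) = E1 x - E1 y"
proof -
  have "E1 (x - y) + E1 y = E1 x" using E1add[of "x - y" y] by simp
  then show ?thesis by (simp add: eq_diff_eq)
qed
lemma E2diff: "E2 (x - y) = E2 x - E2 y"
proof -
  have "E2 (x - y) + E2 y = E2 x" using E2add[of "x - y" y] by simp
  then show ?thesis by (simp add: eq_diff_eq)
qed

lemma M1_0: "0 \<in> M1" using M1(2) V1.spanO_zero by simp
lemma M2_0: "0 \<in> M2" using M2(2) V2.spanO_zero by simp
lemma M1_add: "x \<in> M1 \<Longrightarrow> y \<in> M1 \<Longrightarrow> x + y \<in> M1" using M1(2) V1.spanO_add by simp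
lemma M2_add: "x \<in> M2 \<Longrightarrow> y \<in> M2 \<Longrightarrow> x + y \<in> M2" using M2(2) V2.spanO_add by simp
lemma M1_sc: "a \<in> Ov \<Longrightarrow> x \<in> M1 \<Longrightarrow> sc1 a x \<in> M1" using M1(2) V1.spanO_scale by simp
lemma M2_sc: "a \<in> Ov \<Longrightarrow> x \<in> M2 \<Longrightarrow> sc2 a x \<in> M2" using M2(2) V2.spanO_scale by simp
lemma M1_neg: "x \<in> M1 \<Longrightarrow> - x \<in> M1" using M1(2) V1.spanO_neg by simp
lemma M2_neg: "x \<in> M2 \<Longrightarrow> - x \<in> M2" using M2(2) V2.spanO_neg by simp
lemma M1_diff: "x \<in> M1 \<Longrightarrow> y \<in> M1 \<Longrightarrow> x - y \<in> M1" using M1_add[OF _ M1_neg] by (simp add: diff_conv_add_uminus del: add_uminus_conv_diff)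
lemma M2_diff: "x \<in> M2 \<Longrightarrow> y \<in> M2 \<Longrightarrow> x - y \<in> M2" using M2_add[OF _ M2_neg] by (simp add: diff_conv_add_uminus del: add_uminus_conv_diff)

lemma wk_nz: "w ^ k \<noteq> 0" using V1.w_nz by simp

lemma sc1_into_M1: "\<exists>k. sc1 (w ^ k) x \<in> M1"
proof -
  have "x \<in> V1.spanE n1 m1" using M1(3) by simp
  then obtain c where c: "x = (\<Sum>i<n1. sc1 (c i) (m1 i))" unfolding V1.spanE_def by blast
  obtain k where k: "\<forall>i\<in>{..<n1}. w ^ k * c i \<in> Ov" using V1.scale_into_O_fin[of "{..<n1}" c] by blast
  have "sc1 (w ^ k) x = (\<Sum>i<n1. sc1 (w ^ k * c i) (m1 i))" using c by (simp add: V1.scale_sum_right)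
  also have "\<dots> \<in> M1" unfolding M1(2) by (rule V1.spanO_I[OF refl]) (use k in auto)
  finally show ?thesis by blast
qed

lemma sc2_into_M2: "\<exists>k. sc2 (w ^ k) x \<in> M2"
proof -
  have "x \<in> V2.spanE n2 m2" using M2(3) by simp
  then obtain c where c: "x = (\<Sum>i<n2. sc2 (c i) (m2 i))" unfolding V2.spanE_def by blast
  obtain k where k: "\<forall>i\<in>{..<n2}. w ^ k * c i \<in> Ov" using V1.scale_into_O_fin[of "{..<n2}" c] by blast
  have "sc2 (w ^ k) x = (\<Sum>i<n2. sc2 (w ^ k * c i) (m2 i))" using c by (simp add: V2.scale_sum_right)
  also have "\<dots> \<in> M2" unfolding M2(2) by (rule V2.spanO_I[OF refl]) (use k in auto)
  finally show ?thesis by blast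
qed

lemma orth1': "P (E1 x) (y - E2 y) = 0"
proof -
  obtain k where k: "sc1 (w ^ k) x \<in> M1" using sc1_into_M1 by blast
  obtain j where j: "sc2 (w ^ j) y \<in> M2" using sc2_into_M2 by blast
  have a: "P (E1 (sc1 (w ^ k) x)) (sc2 (w ^ j) y - E2 (sc2 (w ^ j) y)) = 0" using orth1 k j by blast
  have b: "P (E1 (sc1 (w ^ k) x)) (sc2 (w ^ j) y - E2 (sc2 (w ^ j) y)) = w ^ k * (w ^ j * P (E1 x) (y - E2 y))"
    by (simp add: E1sc E2sc Psc1 Psc2 flip: V2.scale_right_diff_distrib)
  from a b have "w ^ k * (w ^ j * P (E1 x) (y - E2 y)) = 0" by simp
  then show ?thesis using V1.w_nz by simp
qed

lemma orth2': "P (x - E1 x) (E2 y) = 0"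
proof -
  obtain k where k: "sc1 (w ^ k) x \<in> M1" using sc1_into_M1 by blast
  obtain j where j: "sc2 (w ^ j) y \<in> M2" using sc2_into_M2 by blast
  have a: "P (sc1 (w ^ k) x - E1 (sc1 (w ^ k) x)) (E2 (sc2 (w ^ j) y)) = 0" using orth2 k j by blast
  have b: "P (sc1 (w ^ k) x - E1 (sc1 (w ^ k) x)) (E2 (sc2 (w ^ j) y)) = w ^ k * (w ^ j * P (x - E1 x) (E2 y))"
    by (simp add: E1sc E2sc Psc1 Psc2 flip: V1.scale_right_diff_distrib)
  from a b have "w ^ k * (w ^ j * P (x - E1 x) (E2 y)) = 0" by simp
  then show ?thesis using V1.w_nz by simp
qed

lemma PE_a: "P (E1 x) y = P (E1 x) (E2 y)"
  using orth1'[of x y] by (simp add: Pdiff2)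

lemma PE_b: "P x (E2 y) = P (E1 x) (E2 y)"
  using orth2'[of x y] by (simp add: Pdiff1)

lemma ND1: "(\<And>y. y \<in> M2 \<Longrightarrow> P x y = 0) \<Longrightarrow> x = 0"
proof -
  assume h: "\<And>y. y \<in> M2 \<Longrightarrow> P x y = 0"
  obtain k where k: "sc1 (w ^ k) x \<in> M1" using sc1_into_M1 by blast
  have "\<forall>y\<in>M2. P (sc1 (w ^ k) x) y = P 0 y" using h by (simp add: Psc1 P0_1)
  then have "sc1 (w ^ k) x = 0" using Pperf k M1_0 unfolding perfect_O_pairing_def by blast
  then show "x = 0" using V1.w_nz by simp
qed

lemma ND2: "(\<And>x. x \<in> M1 \<Longrightarrow> P x y = 0) \<Longrightarrow> y = 0"
proof -
  assume h: "\<And>x. x \<in> M1 \<Longrightarrow> P x y = 0"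
  obtain k where k: "sc2 (w ^ k) y \<in> M2" using sc2_into_M2 by blast
  have "\<forall>x\<in>M1. P x (sc2 (w ^ k) y) = P x 0" using h by (simp add: Psc2 P0_2)
  then have "sc2 (w ^ k) y = 0" using Pperf k M2_0 unfolding perfect_O_pairing_def by blast
  then show "y = 0" using V1.w_nz by simp
qed

lemma D1: "(\<And>y. y \<in> M2 \<Longrightarrow> P x y \<in> Ov) \<Longrightarrow> x \<in> M1"
proof -
  assume h: "\<And>y. y \<in> M2 \<Longrightarrow> P x y \<in> Ov"
  have "O_linear_form Ov sc2 M2 (P x)"
    unfolding O_linear_form_def using h by (simp add: Padd2 Psc2)
  then obtain x' where x': "x' \<in> M1" "\<forall>y\<in>M2. P x' y = P x y"
    using Pperf unfolding perfect_O_pairing_def by blast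
  have "x - x' = 0" by (rule ND1) (use x' in \<open>simp add: Pdiff1\<close>)
  then show "x \<in> M1" using x' by simp
qed

lemma PM: "x \<in> M1 \<Longrightarrow> y \<in> M2 \<Longrightarrow> P x y \<in> Ov"
  using Pperf unfolding perfect_O_pairing_def by blast

lemma N1_iff: "x \<in> E1 ` M1 \<inter> M1 \<longleftrightarrow> x \<in> M1 \<and> E1 x = x"
  using E1idem by force

lemma N2_iff: "y \<in> E2 ` M2 \<inter> M2 \<longleftrightarrow> y \<in> M2 \<and> E2 y = y"
  using E2idem by force

end


context ovs
begin

lemma HQ_sum:
  assumes hq: "hom_quot_to_E_mod_O Ov scale L L' f" and L: "L = spanO s c"
    and a: "\<And>l. l < s \<Longrightarrow> a l \<in> Ov" and A: "A \<subseteq> {..<s}"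
  shows "f (\<Sum>l\<in>A. scale (a l) (c l)) - (\<Sum>l\<in>A. a l * f (c l)) \<in> Ov"
proof -
  have fadd: "\<And>y y'. y \<in> L \<Longrightarrow> y' \<in> L \<Longrightarrow> f (y + y') - f y - f y' \<in> Ov"
    and fsc: "\<And>a y. a \<in> Ov \<Longrightarrow> y \<in> L \<Longrightarrow> f (scale a y) - a * f y \<in> Ov"
    using hq unfolding hom_quot_to_E_mod_O_def by auto
  have z: "0 \<in> L" using L spanO_zero by simp
  have "f (0 + 0) - f 0 - f 0 \<in> Ov" using fadd[OF z z] .
  then have "- f 0 \<in> Ov" by simp
  then have f0: "f 0 \<in> Ov" using Oneg by fastforce
  have cL: "\<And>l. l < s \<Longrightarrow> c l \<in> L" using L basis_in_spanO by blast
  have sL: "\<And>B. B \<subseteq> {..<s} \<Longrightarrow> (\<Sum>l\<in>B. scale (a l) (c l)) \<in> L"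
  proof -
    fix B assume B: "B \<subseteq> {..<s}"
    have "finite B" using B finite_subset by blast
    then show "(\<Sum>l\<in>B. scale (a l) (c l)) \<in> L" using B
    proof (induction B rule: finite_induct)
      case empty then show ?case using z by simp
    next
      case (insert x F)
      have "scale (a x) (c x) \<in> L" unfolding L
        by (rule spanO_scale) (use insert a cL L in auto)
      moreover have "(\<Sum>l\<in>F. scale (a l) (c l)) \<in> L" using insert by auto
      ultimately show ?case using insert L spanO_add by simp
    qed
  qed
  have "finite A" using A finite_subset by blast
  then show ?thesis using A
  proof (induction A rule: finite_induct)
    case empty then show ?case using f0 by simp
  next
    case (insert x F)
    let ?S = "\<Sum>l\<in>F. scale (a l) (c l)"
    have xs: "x < s" using insert by auto
    have t1: "scale (a x) (c x) \<in> L" unfolding L by (rule spanO_scale) (use xs a cL L in auto)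
    have t2: "?S \<in> L" using sL insert by auto
    have "f (scale (a x) (c x) + ?S) - f (scale (a x) (c x)) - f ?S \<in> Ov" using fadd[OF t1 t2] .
    moreover have "f (scale (a x) (c x)) - a x * f (c x) \<in> Ov" using fsc[OF a[OF xs] cL[OF xs]] .
    moreover have "f ?S - (\<Sum>l\<in>F. a l * f (c l)) \<in> Ov" using insert by auto
    ultimately have "(f (scale (a x) (c x) + ?S) - f (scale (a x) (c x)) - f ?S)
       + (f (scale (a x) (c x)) - a x * f (c x)) + (f ?S - (\<Sum>l\<in>F. a l * f (c l))) \<in> Ov"
      using Oadd by blast
    then show ?case using insert by (simp add: algebra_simps)
  qed
qed

end

lemma sum_delta_mult: "k < (r::nat) \<Longrightarrow> (\<Sum>i<r. a i * (if k = i then 1 else 0)) = (a k :: 'e::field)"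
proof -
  assume k: "k < r"
  have "(\<Sum>i<r. a i * (if k = i then 1 else 0)) = (\<Sum>i<r. if i = k then a i else 0)"
    by (rule sum.cong) auto
  also have "\<dots> = a k" using k by simp
  finally show ?thesis .
qed

lemma (in dvr) det_O:
  assumes "A \<in> carrier_mat n n" "\<And>i j. i < n \<Longrightarrow> j < n \<Longrightarrow> A $$ (i, j) \<in> Ov"
  shows "det A \<in> Ov"
proof -
  have "det A = (\<Sum>p\<in>{p. p permutes {0..<n}}. signof p * (\<Prod>i = 0..<n. A $$ (i, p i)))"
    by (rule det_def'[OF assms(1)])
  also have "\<dots> \<in> Ov"
  proof (rule Osum)
    fix p assume "p \<in> {p. p permutes {0..<n}}"
    then have p: "p permutes {0..<n}" by simp
    have "(\<Prod>i = 0..<n. A $$ (i, p i)) \<in> Ov"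
    proof (rule Oprod)
      fix i assume i: "i \<in> {0..<n}"
      then have "p i \<in> {0..<n}" using permutes_in_image[OF p] by simp
      then show "A $$ (i, p i) \<in> Ov" using i assms(2) by simp
    qed
    then show "signof p * (\<Prod>i = 0..<n. A $$ (i, p i)) \<in> Ov" using Omult Oint by blast
  qed
  finally show ?thesis .
qed

context pset
begin

lemma EM1_basis: "\<exists>r b. V1.indep r b \<and> E1 ` M1 = V1.spanO r b"
proof -
  obtain k where k: "\<forall>m\<in>M1. sc1 (w ^ k) (E1 m) \<in> M1" using E1bd by blast
  define b' where "b' = (\<lambda>i. sc1 (inverse (w ^ k)) (m1 i))"
  have ind: "V1.indep n1 b'" unfolding V1.indep_def
  proof (rule allI, rule impI)
    fix c assume c: "(\<Sum>i<n1. sc1 (c i) (b' i)) = 0"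
    have "(\<Sum>i<n1. sc1 (c i * inverse (w ^ k)) (m1 i)) = 0" using c by (simp add: b'_def)
    then have "\<And>i. i < n1 \<Longrightarrow> c i * inverse (w ^ k) = 0" using V1.indepD[OF M1(1), where c="\<lambda>i. c i * inverse (w ^ k)"] by blast
    then show "\<forall>i<n1. c i = 0" using V1.w_nz by simp
  qed
  have sub: "E1 ` M1 \<subseteq> V1.spanO n1 b'"
  proof
    fix x assume "x \<in> E1 ` M1"
    then obtain m where m: "m \<in> M1" "x = E1 m" by blast
    then have "sc1 (w ^ k) x \<in> V1.spanO n1 m1" using k M1(2) by blast
    then obtain c where c: "sc1 (w ^ k) x = (\<Sum>i<n1. sc1 (c i) (m1 i))" "\<forall>i<n1. c i \<in> Ov"
      unfolding V1.spanO_def by blast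
    have "x = sc1 (inverse (w ^ k)) (sc1 (w ^ k) x)" using V1.w_nz by simp
    also have "\<dots> = (\<Sum>i<n1. sc1 (c i) (b' i))"
      unfolding c(1) b'_def by (simp add: V1.scale_sum_right mult.commute)
    finally show "x \<in> V1.spanO n1 b'" by (rule V1.spanO_I) (use c(2) in auto)
  qed
  show ?thesis
  proof (rule V1.lattice_basis[OF ind sub])
    show "0 \<in> E1 ` M1" using M1_0 E1_0 by force
    show "x + y \<in> E1 ` M1" if xy: "x \<in> E1 ` M1" "y \<in> E1 ` M1" for x y
    proof -
      obtain m m' where "m \<in> M1" "m' \<in> M1" "x = E1 m" "y = E1 m'" using xy by blast
      then show ?thesis using M1_add E1add by (intro image_eqI[where x="m + m'"]) auto
    qed
    show "sc1 a x \<in> E1 ` M1" if ax: "a \<in> Ov" "x \<in> E1 ` M1" for a x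
    proof -
      obtain m where "m \<in> M1" "x = E1 m" using ax by blast
      then show ?thesis using M1_sc E1sc ax(1) by (intro image_eqI[where x="sc1 a m"]) auto
    qed
  qed
qed

lemma N1_basis: "\<exists>r b. V1.indep r b \<and> E1 ` M1 \<inter> M1 = V1.spanO r b"
proof (rule V1.lattice_basis[OF M1(1)])
  show "E1 ` M1 \<inter> M1 \<subseteq> V1.spanO n1 m1" using M1(2) by blast
  show "0 \<in> E1 ` M1 \<inter> M1" unfolding N1_iff using M1_0 E1_0 by simp
  show "\<And>x y. x \<in> E1 ` M1 \<inter> M1 \<Longrightarrow> y \<in> E1 ` M1 \<inter> M1 \<Longrightarrow> x + y \<in> E1 ` M1 \<inter> M1"
    unfolding N1_iff using M1_add E1add by simp
  show "\<And>a x. a \<in> Ov \<Longrightarrow> x \<in> E1 ` M1 \<inter> M1 \<Longrightarrow> sc1 a x \<in> E1 ` M1 \<inter> M1"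
    unfolding N1_iff using M1_sc E1sc by simp
qed

lemma DE:
  assumes ind: "V1.indep r b" and EM: "E1 ` M1 = V1.spanO r b"
  shows "\<exists>y. \<forall>i<r. y i \<in> M2 \<and> E2 (y i) = y i \<and> (\<forall>k<r. P (b k) (y i) = (if k = i then 1 else 0))"
proof -
  have main: "\<exists>y. y \<in> M2 \<and> E2 y = y \<and> (\<forall>k<r. P (b k) y = (if k = i then 1 else 0))" if i: "i < r" for i
  proof -
    define f where "f = (\<lambda>m. V1.crd r b i (E1 m))"
    have EMs: "\<And>m. m \<in> M1 \<Longrightarrow> E1 m \<in> V1.spanO r b" using EM by blast
    have EMe: "\<And>m. m \<in> M1 \<Longrightarrow> E1 m \<in> V1.spanE r b" using EMs V1.spanO_sub_spanE by blast
    have fsc: "\<And>a m. m \<in> M1 \<Longrightarrow> f (sc1 a m) = a * f m"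
      unfolding f_def E1sc using V1.crd_scale[OF ind i] EMe by blast
    have "O_linear_form Ov sc1 M1 f"
      unfolding O_linear_form_def
    proof (intro conjI ballI)
      fix m assume "m \<in> M1"
      then show "f m \<in> Ov" unfolding f_def using V1.crd_O[OF ind i] EMs by blast
    next
      fix m m' assume "m \<in> M1" "m' \<in> M1"
      then show "f (m + m') = f m + f m'"
        unfolding f_def E1add using V1.crd_add[OF ind i] EMe by blast
    next
      fix a m assume "a \<in> Ov" "m \<in> M1"
      then show "f (sc1 a m) = a * f m" using fsc by blast
    qed
    then obtain y where y: "y \<in> M2" "\<forall>x\<in>M1. P x y = f x"
      using Pperf unfolding perfect_O_pairing_def by blast
    have key: "P (E1 m) y = f m" if m: "m \<in> M1" for m
    proof -
      obtain k where k: "\<forall>m\<in>M1. sc1 (w ^ k) (E1 m) \<in> M1" using E1bd by blast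
      have m': "sc1 (w ^ k) (E1 m) \<in> M1" using k m by blast
      have "w ^ k * P (E1 m) y = P (sc1 (w ^ k) (E1 m)) y" by (simp add: Psc1)
      also have "\<dots> = f (sc1 (w ^ k) (E1 m))" using y(2) m' by blast
      also have "\<dots> = V1.crd r b i (sc1 (w ^ k) (E1 m))" unfolding f_def E1sc E1idem ..
      also have "\<dots> = w ^ k * f m" unfolding f_def using V1.crd_scale[OF ind i] EMe m by blast
      finally show ?thesis using V1.w_nz by simp
    qed
    have Ey: "y - E2 y = 0"
    proof (rule ND2)
      fix x assume x: "x \<in> M1"
      have a1: "P x (y - E2 y) = P x y - P x (E2 y)" by (rule Pdiff2)
      have a2: "P x (E2 y) = P (E1 x) (E2 y)" by (rule PE_b)
      have a3: "P (E1 x) y = P (E1 x) (E2 y)" by (rule PE_a)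
      have "P x (y - E2 y) = P x y - P (E1 x) y" unfolding a1 a2 a3 ..
      then show "P x (y - E2 y) = 0" using key[OF x] y(2) x by simp
    qed
    have "\<forall>k<r. P (b k) y = (if k = i then 1 else 0)"
    proof (intro allI impI)
      fix k assume k: "k < r"
      have "b k \<in> E1 ` M1" using V1.basis_in_spanO[OF k] EM by simp
      then obtain mk where mk: "mk \<in> M1" "b k = E1 mk" by blast
      have "P (b k) y = f mk" using key mk by simp
      also have "\<dots> = V1.crd r b i (b k)" unfolding f_def mk(2) ..
      also have "\<dots> = (if i = k then 1 else 0)" by (rule V1.crd_basis[OF ind k i])
      finally show "P (b k) y = (if k = i then 1 else 0)" by auto
    qed
    then show ?thesis using y(1) Ey by auto
  qed
  then have "\<forall>i. \<exists>y. i < r \<longrightarrow> y \<in> M2 \<and> E2 y = y \<and> (\<forall>k<r. P (b k) y = (if k = i then 1 else 0))"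
    by blast
  then obtain y where "\<forall>i. i < r \<longrightarrow> y i \<in> M2 \<and> E2 (y i) = y i \<and> (\<forall>k<r. P (b k) (y i) = (if k = i then 1 else 0))"
    by (rule choice[THEN exE]) blast
  then show ?thesis by blast
qed

lemma size_le1:
  assumes "V1.indep r b" "E1 ` M1 = V1.spanO r b" "V1.indep r' b'" "E1 ` M1 \<inter> M1 = V1.spanO r' b'"
  shows "r' \<le> r"
proof (rule V1.indep_le[OF assms(3)])
  fix i assume "i < r'"
  then have "b' i \<in> E1 ` M1 \<inter> M1" using V1.basis_in_spanO assms(4) by blast
  then show "b' i \<in> V1.spanE r b" using assms(2) V1.spanO_sub_spanE by blast
qed

lemma size_le2:
  assumes ind: "V1.indep r b" and EM: "E1 ` M1 = V1.spanO r b"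
    and "V2.indep s' c'" "E2 ` M2 \<inter> M2 = V2.spanO s' c'"
  shows "r \<le> s'"
proof -
  obtain y where y: "\<forall>i<r. y i \<in> M2 \<and> E2 (y i) = y i \<and> (\<forall>k<r. P (b k) (y i) = (if k = i then 1 else 0))"
    using DE[OF ind EM] by blast
  have "V2.indep r y" unfolding V2.indep_def
  proof (rule allI, rule impI)
    fix a assume a: "(\<Sum>i<r. sc2 (a i) (y i)) = 0"
    show "\<forall>i<r. a i = 0"
    proof (intro allI impI)
      fix k assume k: "k < r"
      have "0 = P (b k) (\<Sum>i<r. sc2 (a i) (y i))" using a P0_2 by simp
      also have "\<dots> = (\<Sum>i<r. a i * P (b k) (y i))" by (rule Psum2)
      also have "\<dots> = (\<Sum>i<r. a i * (if k = i then 1 else 0))"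
        by (rule sum.cong) (use y k in auto)
      also have "\<dots> = a k" using sum_delta_mult[OF k] .
      finally show "a k = 0" by simp
    qed
  qed
  then show ?thesis
  proof (rule V2.indep_le)
    fix i assume "i < r"
    then have "y i \<in> E2 ` M2 \<inter> M2" using y N2_iff by blast
    then show "y i \<in> V2.spanE s' c'" using assms(4) V2.spanO_sub_spanE by blast
  qed
qed

lemma PEN: "m \<in> M1 \<Longrightarrow> y \<in> E2 ` M2 \<inter> M2 \<Longrightarrow> P (E1 m) y \<in> Ov"
proof -
  assume m: "m \<in> M1" and y: "y \<in> E2 ` M2 \<inter> M2"
  have "P (E1 m) y = P (E1 m) (E2 y)" by (rule PE_a)
  also have "\<dots> = P m (E2 y)" by (rule PE_b[symmetric])
  also have "\<dots> = P m y" using y N2_iff by simp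
  finally show ?thesis using PM m y by simp
qed

lemma G_unit:
  assumes ind: "V1.indep r b" and EM: "E1 ` M1 = V1.spanO r b"
    and indc: "V2.indep r c'" and N2: "E2 ` M2 \<inter> M2 = V2.spanO r c'"
  shows "V1.unit (det (mat r r (\<lambda>(i, k). P (b i) (c' k))))"
proof -
  obtain y where y: "\<forall>i<r. y i \<in> M2 \<and> E2 (y i) = y i \<and> (\<forall>k<r. P (b k) (y i) = (if k = i then 1 else 0))"
    using DE[OF ind EM] by blast
  have yN: "\<And>i. i < r \<Longrightarrow> y i \<in> V2.spanO r c'" using y N2_iff N2 by blast
  have yrep: "\<And>i. i < r \<Longrightarrow> y i = (\<Sum>l<r. sc2 (V2.crd r c' l (y i)) (c' l))"
    using V2.spanE_repr[OF indc] yN V2.spanO_sub_spanE by blast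
  define G where "G = mat r r (\<lambda>(i, k). P (b i) (c' k))"
  define Y where "Y = mat r r (\<lambda>(l, i). V2.crd r c' l (y i))"
  have GY: "G * Y = 1\<^sub>m r"
  proof (rule eq_matI)
    fix k i assume k: "k < dim_row (1\<^sub>m r)" and i: "i < dim_col (1\<^sub>m r)"
    then have k': "k < r" and i': "i < r" by auto
    have "(G * Y) $$ (k, i) = (\<Sum>l<r. P (b k) (c' l) * V2.crd r c' l (y i))"
      using k' i' by (simp add: G_def Y_def scalar_prod_def lessThan_atLeast0)
    also have "\<dots> = (\<Sum>l<r. V2.crd r c' l (y i) * P (b k) (c' l))" by (simp add: mult.commute)
    also have "\<dots> = P (b k) (\<Sum>l<r. sc2 (V2.crd r c' l (y i)) (c' l))" by (rule Psum2[symmetric])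
    also have "\<dots> = P (b k) (y i)" using yrep[OF i'] by simp
    also have "\<dots> = 1\<^sub>m r $$ (k, i)" using y k' i' by auto
    finally show "(G * Y) $$ (k, i) = 1\<^sub>m r $$ (k, i)" .
  qed (auto simp: G_def Y_def)
  have "det G * det Y = 1"
    using det_mult[of G r Y] GY by (simp add: G_def Y_def)
  moreover have "det Y \<in> Ov"
    by (rule V1.det_O[of _ r]) (use V2.crd_O[OF indc] yN in \<open>auto simp: Y_def\<close>)
  moreover have "det G \<in> Ov"
  proof (rule V1.det_O[of _ r])
    show "G \<in> carrier_mat r r" by (simp add: G_def)
    fix i k assume i: "i < r" and k: "k < r"
    have "b i \<in> E1 ` M1" using V1.basis_in_spanO[OF i] EM by simp
    then obtain m where m: "m \<in> M1" "b i = E1 m" by blast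
    have "c' k \<in> E2 ` M2 \<inter> M2" using V2.basis_in_spanO[OF k] N2 by simp
    then show "G $$ (i, k) \<in> Ov" using PEN m i k by (simp add: G_def)
  qed
  ultimately show ?thesis unfolding G_def using V1.unitI by blast
qed

lemma PF1: "x \<in> E1 ` M1 \<inter> M1 \<Longrightarrow> y \<in> E2 ` M2 \<Longrightarrow> P x y \<in> Ov"
proof -
  assume x: "x \<in> E1 ` M1 \<inter> M1" and "y \<in> E2 ` M2"
  then obtain m where m: "m \<in> M2" "y = E2 m" by blast
  have "P x y = P x (E2 m)" using m by simp
  also have "\<dots> = P (E1 x) (E2 m)" by (rule PE_b)
  also have "\<dots> = P (E1 x) m" by (rule PE_a[symmetric])
  also have "\<dots> = P x m" using x N1_iff by simp
  finally show ?thesis using PM x m by simp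
qed

lemma PF3: "x \<in> E1 ` M1 \<Longrightarrow> (\<forall>y\<in>E2 ` M2. P x y \<in> Ov) \<Longrightarrow> x \<in> E1 ` M1 \<inter> M1"
proof -
  assume x: "x \<in> E1 ` M1" and h: "\<forall>y\<in>E2 ` M2. P x y \<in> Ov"
  then obtain m where m: "m \<in> M1" "x = E1 m" by blast
  have "x \<in> M1"
  proof (rule D1)
    fix y assume "y \<in> M2"
    then have "P x (E2 y) \<in> Ov" using h by blast
    moreover have "P (E1 m) y = P (E1 m) (E2 y)" by (rule PE_a)
    ultimately show "P x y \<in> Ov" using m(2) by simp
  qed
  then show ?thesis using x by blast
qed

end


context pset
begin

lemma sizes:
  assumes b: "V1.indep r b" "E1 ` M1 = V1.spanO r b"
    and b': "V1.indep r' b'" "E1 ` M1 \<inter> M1 = V1.spanO r' b'"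
    and c: "V2.indep s c" "E2 ` M2 = V2.spanO s c"
    and c': "V2.indep s' c'" "E2 ` M2 \<inter> M2 = V2.spanO s' c'"
  shows "r' = r" "s' = r" "s = r"
proof -
  interpret sw: pset Ov v w sc2 sc1 M2 M1 "\<lambda>y x. P x y" E2 E1 n2 m2 n1 m1 by (rule swap)
  have "r' \<le> r" by (rule size_le1[OF b b'])
  moreover have "r \<le> s'" by (rule size_le2[OF b c'])
  moreover have "s' \<le> s" by (rule sw.size_le1[OF c c'])
  moreover have "s \<le> r'" by (rule sw.size_le2[OF c b'])
  ultimately show "r' = r" "s' = r" "s = r" by auto
qed

lemma PF4:
  assumes hq: "hom_quot_to_E_mod_O Ov sc2 (E2 ` M2) (E2 ` M2 \<inter> M2) f"
  shows "\<exists>x\<in>E1 ` M1. \<forall>y\<in>E2 ` M2. P x y - f y \<in> Ov"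
proof -
  interpret sw: pset Ov v w sc2 sc1 M2 M1 "\<lambda>y x. P x y" E2 E1 n2 m2 n1 m1 by (rule swap)
  obtain r b where b: "V1.indep r b" "E1 ` M1 = V1.spanO r b" using EM1_basis by blast
  obtain s c where c: "V2.indep s c" "E2 ` M2 = V2.spanO s c" using sw.EM1_basis by blast
  obtain x where x: "\<forall>k<s. x k \<in> M1 \<and> E1 (x k) = x k \<and> (\<forall>l<s. P (x k) (c l) = (if l = k then 1 else 0))"
    using sw.DE[OF c] by auto
  obtain y where y: "\<forall>i<r. y i \<in> M2 \<and> E2 (y i) = y i \<and> (\<forall>k<r. P (b k) (y i) = (if k = i then 1 else 0))"
    using DE[OF b] by blast
  define x0 where "x0 = (\<Sum>k<s. sc1 (f (c k)) (x k))"
  have Pc: "P x0 (c l) = f (c l)" if l: "l < s" for l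
  proof -
    have "P x0 (c l) = (\<Sum>k<s. f (c k) * P (x k) (c l))" unfolding x0_def by (rule Psum1)
    also have "\<dots> = (\<Sum>k<s. f (c k) * (if l = k then 1 else 0))" by (rule sum.cong) (use x l in auto)
    also have "\<dots> = f (c l)" by (rule sum_delta_mult[OF l])
    finally show ?thesis .
  qed
  have Py: "P x0 y' - f y' \<in> Ov" if y': "y' \<in> E2 ` M2" for y'
  proof -
    have y'e: "y' \<in> V2.spanE s c" using y' c(2) V2.spanO_sub_spanE by blast
    have rep: "y' = (\<Sum>l<s. sc2 (V2.crd s c l y') (c l))" using V2.spanE_repr[OF c(1) y'e] .
    have "P x0 y' = (\<Sum>l<s. V2.crd s c l y' * P x0 (c l))" by (subst rep) (rule Psum2)
    also have "\<dots> = (\<Sum>l<s. V2.crd s c l y' * f (c l))" by (rule sum.cong) (use Pc in auto)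
    finally have e: "P x0 y' = (\<Sum>l<s. V2.crd s c l y' * f (c l))" .
    have "f (\<Sum>l<s. sc2 (V2.crd s c l y') (c l)) - (\<Sum>l<s. V2.crd s c l y' * f (c l)) \<in> Ov"
      by (rule V2.HQ_sum[OF hq c(2)]) (use V2.crd_O[OF c(1)] y' c(2) in auto)
    then have "f y' - P x0 y' \<in> Ov" using rep e by simp
    then have "- (f y' - P x0 y') \<in> Ov" by (rule V1.Oneg)
    then show ?thesis by simp
  qed
  have x0e: "x0 \<in> V1.spanE r b"
    unfolding x0_def
  proof (rule V1.spanE_sum)
    fix k assume "k \<in> {..<s}"
    then have "x k \<in> E1 ` M1 \<inter> M1" using x N1_iff by auto
    then show "x k \<in> V1.spanE r b" using b(2) V1.spanO_sub_spanE by blast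
  qed simp
  have "x0 \<in> V1.spanO r b"
    unfolding V1.spanO_iff[OF b(1)]
  proof (intro conjI allI impI x0e)
    fix i assume i: "i < r"
    have rep: "x0 = (\<Sum>j<r. sc1 (V1.crd r b j x0) (b j))" using V1.spanE_repr[OF b(1) x0e] .
    have "P x0 (y i) = (\<Sum>j<r. V1.crd r b j x0 * P (b j) (y i))" by (subst rep) (rule Psum1)
    also have "\<dots> = (\<Sum>j<r. V1.crd r b j x0 * (if i = j then 1 else 0))"
      by (rule sum.cong) (use y i in auto)
    also have "\<dots> = V1.crd r b i x0" by (rule sum_delta_mult[OF i])
    finally have e: "P x0 (y i) = V1.crd r b i x0" .
    have yi: "y i \<in> E2 ` M2 \<inter> M2" using y i N2_iff by blast
    have "P x0 (y i) - f (y i) \<in> Ov" using Py yi by blast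
    moreover have "f (y i) \<in> Ov" using hq yi unfolding hom_quot_to_E_mod_O_def by blast
    ultimately have "(P x0 (y i) - f (y i)) + f (y i) \<in> Ov" by (rule V1.Oadd)
    then show "V1.crd r b i x0 \<in> Ov" using e by simp
  qed
  then have "x0 \<in> E1 ` M1" using b(2) by simp
  then show ?thesis using Py by blast
qed

lemma transpose_mat_mat: "transpose_mat (mat n n f) = mat n n (\<lambda>(i, j). f (j, i))"
  by (rule eq_matI) auto

lemma FI:
  assumes "x \<in> fitting_ideal_quot Ov sc1 (E1 ` M1) (E1 ` M1 \<inter> M1)"
  shows "x \<in> fitting_ideal_quot Ov sc2 (E2 ` M2) (E2 ` M2 \<inter> M2)"
proof -
  interpret sw: pset Ov v w sc2 sc1 M2 M1 "\<lambda>y x. P x y" E2 E1 n2 m2 n1 m1 by (rule swap)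
  obtain r b b' A a where bb: "O_basis Ov sc1 r b (E1 ` M1)" "O_basis Ov sc1 r b' (E1 ` M1 \<inter> M1)"
    and bA: "\<forall>j<r. b' j = (\<Sum>i<r. sc1 (A i j) (b i))" and a: "a \<in> Ov"
    and x: "x = a * det (mat r r (\<lambda>(i, j). A i j))"
    using assms unfolding fitting_ideal_quot_def by blast
  have b: "V1.indep r b" "E1 ` M1 = V1.spanO r b" using bb(1) V1.O_basis_iff by auto
  have b': "V1.indep r b'" "E1 ` M1 \<inter> M1 = V1.spanO r b'" using bb(2) V1.O_basis_iff by auto
  obtain s c where c: "V2.indep s c" "E2 ` M2 = V2.spanO s c" using sw.EM1_basis by blast
  obtain s' c' where c': "V2.indep s' c'" "E2 ` M2 \<inter> M2 = V2.spanO s' c'" using sw.N1_basis by blast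
  have ss: "s' = r" "s = r" using sizes[OF b b' c c'] by auto
  note c = c[unfolded ss] and c' = c'[unfolded ss]
  define B where "B = (\<lambda>l k. V2.crd r c l (c' k))"
  have c'rep: "c' k = (\<Sum>l<r. sc2 (B l k) (c l))" if k: "k < r" for k
  proof -
    have "c' k \<in> E2 ` M2" using V2.basis_in_spanO[OF k] c'(2) by blast
    then have "c' k \<in> V2.spanE r c" using c(2) V2.spanO_sub_spanE by blast
    then show ?thesis unfolding B_def by (rule V2.spanE_repr[OF c(1)])
  qed
  define Am where "Am = mat r r (\<lambda>(i, j). A i j)"
  define Bm where "Bm = mat r r (\<lambda>(l, k). B l k)"
  define G where "G = mat r r (\<lambda>(i, l). P (b i) (c l))"
  define G1 where "G1 = mat r r (\<lambda>(i, k). P (b i) (c' k))"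
  define G2 where "G2 = mat r r (\<lambda>(j, l). P (b' j) (c l))"
  have carr: "Am \<in> carrier_mat r r" "Bm \<in> carrier_mat r r" "G \<in> carrier_mat r r"
    "G1 \<in> carrier_mat r r" "G2 \<in> carrier_mat r r"
    by (simp_all add: Am_def Bm_def G_def G1_def G2_def)
  have G2eq: "G2 = transpose_mat Am * G"
  proof (rule eq_matI)
    fix j l assume j: "j < dim_row (transpose_mat Am * G)" and l: "l < dim_col (transpose_mat Am * G)"
    then have j': "j < r" and l': "l < r" by (auto simp: Am_def G_def)
    have "(transpose_mat Am * G) $$ (j, l) = (\<Sum>i<r. A i j * P (b i) (c l))"
      using j' l' by (simp add: Am_def G_def scalar_prod_def lessThan_atLeast0)
    also have "\<dots> = P (\<Sum>i<r. sc1 (A i j) (b i)) (c l)" by (rule Psum1[symmetric])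
    also have "\<dots> = G2 $$ (j, l)" using bA j' l' by (simp add: G2_def)
    finally show "G2 $$ (j, l) = (transpose_mat Am * G) $$ (j, l)" by simp
  qed (auto simp: Am_def G_def G2_def)
  have G1eq: "G1 = G * Bm"
  proof (rule eq_matI)
    fix i k assume i: "i < dim_row (G * Bm)" and k: "k < dim_col (G * Bm)"
    then have i': "i < r" and k': "k < r" by (auto simp: Bm_def G_def)
    have "(G * Bm) $$ (i, k) = (\<Sum>l<r. P (b i) (c l) * B l k)"
      using i' k' by (simp add: Bm_def G_def scalar_prod_def lessThan_atLeast0)
    also have "\<dots> = (\<Sum>l<r. B l k * P (b i) (c l))" by (simp add: mult.commute)
    also have "\<dots> = P (b i) (\<Sum>l<r. sc2 (B l k) (c l))" by (rule Psum2[symmetric])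
    also have "\<dots> = G1 $$ (i, k)" using c'rep[OF k'] i' k' by (simp add: G1_def)
    finally show "G1 $$ (i, k) = (G * Bm) $$ (i, k)" by simp
  qed (auto simp: Bm_def G_def G1_def)
  have dG2: "det G2 = det Am * det G"
    unfolding G2eq using det_mult[of "transpose_mat Am" r G] det_transpose[of Am r] carr by simp
  have dG1: "det G1 = det G * det Bm"
    unfolding G1eq using det_mult[of G r Bm] carr by simp
  have u1: "V1.unit (det G1)" unfolding G1_def by (rule G_unit[OF b c'])
  have "V1.unit (det (mat r r (\<lambda>(l, j). P (b' j) (c l))))"
    using sw.G_unit[OF c b'] by simp
  moreover have "mat r r (\<lambda>(l, j). P (b' j) (c l)) = transpose_mat G2"
    unfolding G2_def transpose_mat_mat by (simp add: case_prod_beta)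
  ultimately have u2: "V1.unit (det G2)" using det_transpose[OF carr(5)] by simp
  have dG: "det G \<noteq> 0" using u1 dG1 unfolding V1.unit_def by auto
  have "det Am = det G2 / det G" using dG2 dG by simp
  also have "\<dots> = det G2 * det Bm / det G1" using dG1 dG u1 unfolding V1.unit_def by (simp add: field_simps)
  finally have dAm: "det Am = det G2 * inverse (det G1) * det Bm" by (simp add: field_simps)
  define a' where "a' = a * det G2 * inverse (det G1)"
  have a': "a' \<in> Ov" unfolding a'_def using a u1 u2 unfolding V1.unit_def by (intro V1.Omult) auto
  have "x = a' * det (mat r r (\<lambda>(i, j). B i j))"
    unfolding x a'_def using dAm by (simp add: Am_def Bm_def mult.assoc)
  moreover have "O_basis Ov sc2 r c (E2 ` M2)" "O_basis Ov sc2 r c' (E2 ` M2 \<inter> M2)"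
    using c c' V2.O_basis_iff by auto
  ultimately show ?thesis unfolding fitting_ideal_quot_def using c'rep a' by blast
qed

end


context pset
begin

lemma sum1: "(\<Sum>i<Suc 0. f i) = f 0" by simp

lemma PB:
  assumes d1: "O_basis Ov sc1 1 (\<lambda>_. d1) (E1 ` M1 \<inter> M1)"
    and d2: "O_basis Ov sc2 1 (\<lambda>_. d2) (E2 ` M2 \<inter> M2)"
  shows "fitting_ideal_quot Ov sc1 (E1 ` M1) (E1 ` M1 \<inter> M1) = O_mult Ov (P d1 d2)"
proof -
  interpret sw: pset Ov v w sc2 sc1 M2 M1 "\<lambda>y x. P x y" E2 E1 n2 m2 n1 m1 by (rule swap)
  have D1: "V1.indep 1 (\<lambda>_. d1)" "E1 ` M1 \<inter> M1 = V1.spanO 1 (\<lambda>_. d1)" using d1 V1.O_basis_iff by auto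
  have D2: "V2.indep 1 (\<lambda>_. d2)" "E2 ` M2 \<inter> M2 = V2.spanO 1 (\<lambda>_. d2)" using d2 V2.O_basis_iff by auto
  obtain s c where c: "V2.indep s c" "E2 ` M2 = V2.spanO s c" using sw.EM1_basis by blast
  have U: "V1.unit (P (bb 0) d2)" if bb: "V1.indep 1 bb" "E1 ` M1 = V1.spanO 1 bb" for bb
  proof -
    have "V1.unit (det (mat 1 1 (\<lambda>(i, k). P (bb i) ((\<lambda>_. d2) k))))" by (rule G_unit[OF bb D2])
    moreover have "det (mat 1 1 (\<lambda>(i, k). P (bb i) ((\<lambda>_. d2) k))) = P (bb 0) d2"
      by (subst det_single) auto
    ultimately show ?thesis by simp
  qed
  have d1E: "d1 \<in> E1 ` M1" using V1.basis_in_spanO[of 0 1 "\<lambda>_. d1"] D1(2) by auto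
  show ?thesis
  proof
    show "fitting_ideal_quot Ov sc1 (E1 ` M1) (E1 ` M1 \<inter> M1) \<subseteq> O_mult Ov (P d1 d2)"
    proof
      fix x assume "x \<in> fitting_ideal_quot Ov sc1 (E1 ` M1) (E1 ` M1 \<inter> M1)"
      then obtain r bb bb' A a where bb: "O_basis Ov sc1 r bb (E1 ` M1)" "O_basis Ov sc1 r bb' (E1 ` M1 \<inter> M1)"
        and bA: "\<forall>j<r. bb' j = (\<Sum>i<r. sc1 (A i j) (bb i))" and a: "a \<in> Ov"
        and x: "x = a * det (mat r r (\<lambda>(i, j). A i j))"
        unfolding fitting_ideal_quot_def by blast
      have b: "V1.indep r bb" "E1 ` M1 = V1.spanO r bb" using bb(1) V1.O_basis_iff by auto
      have b': "V1.indep r bb'" "E1 ` M1 \<inter> M1 = V1.spanO r bb'" using bb(2) V1.O_basis_iff by auto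
      have r1: "r = 1" using sizes[OF b b' c D2] by simp
      note b = b[unfolded r1]
      have u: "V1.unit (P (bb 0) d2)" by (rule U[OF b])
      have e0: "bb' 0 = sc1 (A 0 0) (bb 0)" using bA r1 by simp
      have "bb' 0 \<in> V1.spanO 1 (\<lambda>_. d1)" using V1.basis_in_spanO[of 0 r bb'] b'(2) r1 D1(2) by auto
      then obtain \<beta> where be: "bb' 0 = (\<Sum>i<(1::nat). sc1 (\<beta> i) d1)" "\<forall>i<(1::nat). \<beta> i \<in> Ov"
        unfolding V1.spanO_def by blast
      have "A 0 0 * P (bb 0) d2 = P (bb' 0) d2" using e0 by (simp add: Psc1)
      also have "\<dots> = \<beta> 0 * P d1 d2" using be(1) by (simp add: Psc1)
      finally have eA: "A 0 0 * P (bb 0) d2 = \<beta> 0 * P d1 d2" .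
      have "det (mat r r (\<lambda>(i, j). A i j)) = A 0 0" unfolding r1 by (subst det_single) auto
      then have "x = (a * \<beta> 0 * inverse (P (bb 0) d2)) * P d1 d2"
        using x eA u unfolding V1.unit_def by (simp add: field_simps)
      moreover have "a * \<beta> 0 * inverse (P (bb 0) d2) \<in> Ov"
        using a be(2) u unfolding V1.unit_def by (intro V1.Omult) auto
      ultimately show "x \<in> O_mult Ov (P d1 d2)" unfolding O_mult_def by blast
    qed
  next
    show "O_mult Ov (P d1 d2) \<subseteq> fitting_ideal_quot Ov sc1 (E1 ` M1) (E1 ` M1 \<inter> M1)"
    proof
      fix x assume "x \<in> O_mult Ov (P d1 d2)"
      then obtain a' where a': "a' \<in> Ov" "x = a' * P d1 d2" unfolding O_mult_def by blast
      obtain r b where b: "V1.indep r b" "E1 ` M1 = V1.spanO r b" using EM1_basis by blast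
      have r1: "r = 1" using sizes[OF b D1 c D2] by simp
      note b = b[unfolded r1]
      have u: "V1.unit (P (b 0) d2)" by (rule U[OF b])
      define \<alpha> where "\<alpha> = V1.crd 1 b 0 d1"
      have "d1 \<in> V1.spanE 1 b" using d1E b(2) V1.spanO_sub_spanE by blast
      then have "d1 = (\<Sum>j<1. sc1 (V1.crd 1 b j d1) (b j))" by (rule V1.spanE_repr[OF b(1)])
      then have d1r: "d1 = sc1 \<alpha> (b 0)" unfolding \<alpha>_def by simp
      have "P d1 d2 = \<alpha> * P (b 0) d2" by (subst d1r) (simp add: Psc1)
      then have xe: "x = (a' * P (b 0) d2) * det (mat 1 1 (\<lambda>(i, j). (\<lambda>i j. \<alpha>) i j))"
        using a'(2) by (subst det_single) auto
      have f1: "O_basis Ov sc1 1 b (E1 ` M1)" using b V1.O_basis_iff by auto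
      have f2: "\<forall>j<(1::nat). (\<lambda>_. d1) j = (\<Sum>i<1. sc1 ((\<lambda>i j. \<alpha>) i j) (b i))" using d1r by simp
      have f3: "a' * P (b 0) d2 \<in> Ov" using a'(1) u unfolding V1.unit_def by (intro V1.Omult) auto
      have "\<exists>r bb bb' A a. O_basis Ov sc1 r bb (E1 ` M1) \<and> O_basis Ov sc1 r bb' (E1 ` M1 \<inter> M1) \<and>
          (\<forall>j<r. bb' j = (\<Sum>i<r. sc1 (A i j) (bb i))) \<and> a \<in> Ov \<and> x = a * det (mat r r (\<lambda>(i, j). A i j))"
        by (rule exI[of _ 1], rule exI[of _ b], rule exI[of _ "\<lambda>_. d1"], rule exI[of _ "\<lambda>i j. \<alpha>"],
            rule exI[of _ "a' * P (b 0) d2"], intro conjI f1 d1 f2 f3 xe)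
      then show "x \<in> fitting_ideal_quot Ov sc1 (E1 ` M1) (E1 ` M1 \<inter> M1)"
        unfolding fitting_ideal_quot_def by (rule CollectI)
    qed
  qed
qed

end


lemma rh_basic:
  assumes "ring_hom_fun iota"
  shows "iota 0 = 0" "iota (a + b) = iota a + iota b" "iota (a * b) = iota a * iota b" "iota 1 = 1"
proof -
  show "iota (a + b) = iota a + iota b" "iota (a * b) = iota a * iota b" "iota 1 = 1"
    using assms unfolding ring_hom_fun_def by auto
  have "iota (0 + 0) = iota 0 + iota 0" using assms unfolding ring_hom_fun_def by blast
  then show "iota 0 = 0" by simp
qed

lemma vs_from_module:
  fixes iota :: "'e::field \<Rightarrow> 'a::comm_ring_1" and act :: "'a \<Rightarrow> 'v::ab_group_add \<Rightarrow> 'v"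
  assumes "ring_hom_fun iota" "Modules.module act"
  shows "vector_space (\<lambda>c m. act (iota c) m)"
proof -
  interpret Modules.module act by fact
  show ?thesis
    by unfold_locales (simp_all add: rh_basic[OF assms(1)] scale_right_distrib scale_left_distrib)
qed

lemma ker_torsion_eq:
  fixes iota :: "'e::field \<Rightarrow> 'a::comm_ring_1" and act :: "'a \<Rightarrow> 'v::ab_group_add \<Rightarrow> 'v"
  assumes T: "reduced_finite_flat_local_algebra Ov iota T"
    and lam: "O_algebra_hom_to_O Ov iota T lam"
    and e: "lambda_idempotent iota T lam e"
    and M: "lattice_module Ov iota T act M"
    and bd: "iota c * e \<in> T" and c: "c \<in> Ov" "c \<noteq> 0"
  shows "ker_torsion T lam act M = act e ` M \<inter> M"
proof -
  have rh: "ring_hom_fun iota" using T unfolding reduced_finite_flat_local_algebra_def by blast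
  note rhb = rh_basic[OF rh]
  interpret Modules.module act using M unfolding lattice_module_def by blast
  have Tcl: "1 \<in> T" "\<And>x y. x \<in> T \<Longrightarrow> y \<in> T \<Longrightarrow> x + y \<in> T" "\<And>x. x \<in> T \<Longrightarrow> - x \<in> T"
    "\<And>a t. a \<in> Ov \<Longrightarrow> t \<in> T \<Longrightarrow> iota a * t \<in> T"
    using T unfolding reduced_finite_flat_local_algebra_def by auto
  have MT: "\<And>t m. t \<in> T \<Longrightarrow> m \<in> M \<Longrightarrow> act t m \<in> M" using M unfolding lattice_module_def by blast
  have ee: "e * e = e" "e \<noteq> 0" "\<And>t. t \<in> T \<Longrightarrow> e * t = iota (lam t) * e"
    using e unfolding lambda_idempotent_def by auto
  show ?thesis
  proof
    show "act e ` M \<inter> M \<subseteq> ker_torsion T lam act M"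
    proof
      fix m assume "m \<in> act e ` M \<inter> M"
      then obtain m0 where m: "m \<in> M" "m = act e m0" by blast
      have "act t m = 0" if t: "t \<in> T" "lam t = 0" for t
      proof -
        have "act t m = act (e * t) m0" using m(2) by (simp add: mult.commute)
        also have "\<dots> = act (iota (lam t) * e) m0" using ee(3)[OF t(1)] by simp
        also have "\<dots> = 0" using t(2) rhb by simp
        finally show ?thesis .
      qed
      then show "m \<in> ker_torsion T lam act M" unfolding ker_torsion_def using m(1) by blast
    qed
  next
    show "ker_torsion T lam act M \<subseteq> act e ` M \<inter> M"
    proof
      fix m assume "m \<in> ker_torsion T lam act M"
      then have m: "m \<in> M" "\<And>t. t \<in> T \<Longrightarrow> lam t = 0 \<Longrightarrow> act t m = 0" unfolding ker_torsion_def by auto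
      define t0 where "t0 = iota c * 1 + - (iota c * e)"
      have t0T: "t0 \<in> T" unfolding t0_def using Tcl bd c by blast
      have "e * t0 = iota c * (e - e * e)" unfolding t0_def by (simp add: algebra_simps)
      also have "\<dots> = 0" using ee(1) by simp
      finally have "iota (lam t0) * e = 0" using ee(3)[OF t0T] by simp
      have l0: "lam t0 = 0"
      proof (rule ccontr)
        assume ne: "lam t0 \<noteq> 0"
        have "e = iota (inverse (lam t0) * lam t0) * e" using ne rhb by simp
        also have "\<dots> = iota (inverse (lam t0)) * (iota (lam t0) * e)" using rhb by (simp add: mult.assoc)
        also have "\<dots> = 0" using \<open>iota (lam t0) * e = 0\<close> by simp
        finally show False using ee(2) by simp
      qed
      have "act t0 m = 0" using m(2)[OF t0T l0] .
      moreover have "act t0 m = act (iota c) (m - act e m)"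
        unfolding t0_def by (simp add: scale_left_distrib scale_right_distrib scale_right_diff_distrib diff_conv_add_uminus del: add_uminus_conv_diff)
      ultimately have "act (iota c) (m - act e m) = 0" by simp
      then have "act (iota (inverse c)) (act (iota c) (m - act e m)) = 0" by simp
      then have "act (iota (inverse c * c)) (m - act e m) = 0" using rhb by (simp add: mult.commute)
      then have "m - act e m = 0" using c rhb by simp
      then have "m = act e m" by simp
      then show "m \<in> act e ` M \<inter> M" using m(1) by blast
    qed
  qed
qed


lemma module_times: "Modules.module (\<lambda>a (x::'a::comm_ring_1). a * x)"
  by unfold_locales (simp_all add: algebra_simps)

lemma T_bound:
  fixes iota :: "'e::field \<Rightarrow> 'a::comm_ring_1"
  assumes dv: "dvr Ov v w" and T: "reduced_finite_flat_local_algebra Ov iota T"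
  shows "\<exists>k. iota (w ^ k) * x \<in> T"
proof -
  have rh: "ring_hom_fun iota" using T unfolding reduced_finite_flat_local_algebra_def by blast
  note rhb = rh_basic[OF rh]
  have vs: "vector_space (\<lambda>c m. iota c * m)" using vs_from_module[OF rh module_times] by simp
  interpret VT: ovs Ov v w "\<lambda>c m. iota c * m" by (intro ovs.intro dv vs)
  have "full_O_lattice Ov (\<lambda>c x. iota c * x) T" using T unfolding reduced_finite_flat_local_algebra_def by blast
  then obtain r b where rb: "O_basis Ov (\<lambda>c x. iota c * x) r b T" "VT.span (b ` {..<r}) = UNIV"
    unfolding full_O_lattice_def by blast
  have ib: "VT.indep r b" "T = VT.spanO r b" using rb(1) VT.O_basis_iff by auto
  have inj: "inj_on b {..<r}" using rb(1) unfolding O_basis_def by blast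
  have "x \<in> VT.spanE r b" using VT.span_sub_spanE[OF inj] rb(2) by blast
  then obtain c where c: "x = (\<Sum>i<r. iota (c i) * b i)" unfolding VT.spanE_def by blast
  obtain k where k: "\<forall>i\<in>{..<r}. w ^ k * c i \<in> Ov" using VT.scale_into_O_fin[of "{..<r}" c] by blast
  have "iota (w ^ k) * x = (\<Sum>i<r. iota (w ^ k) * (iota (c i) * b i))"
    unfolding c by (rule sum_distrib_left)
  also have "\<dots> = (\<Sum>i<r. iota (w ^ k * c i) * b i)"
    by (rule sum.cong) (simp_all only: rhb(3) mult.assoc)
  also have "\<dots> \<in> VT.spanO r b" by (rule VT.spanO_I[OF refl]) (use k in auto)
  finally show ?thesis using ib(2) by blast
qed

lemma lattice_data:
  fixes iota :: "'e::field \<Rightarrow> 'a::comm_ring_1" and act :: "'a \<Rightarrow> 'v::ab_group_add \<Rightarrow> 'v"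
  assumes dv: "dvr Ov v w" and T: "reduced_finite_flat_local_algebra Ov iota T"
    and M: "lattice_module Ov iota T act M"
  shows "ovs Ov v w (\<lambda>c m. act (iota c) m)"
    and "\<exists>n b. ovs.indep (\<lambda>c m. act (iota c) m) n b \<and> M = ovs.spanO Ov (\<lambda>c m. act (iota c) m) n b
              \<and> ovs.spanE (\<lambda>c m. act (iota c) m) n b = UNIV"
    and "\<exists>k. \<forall>m\<in>M. act (iota (w ^ k)) (act e m) \<in> M"
proof -
  have rh: "ring_hom_fun iota" using T unfolding reduced_finite_flat_local_algebra_def by blast
  note rhb = rh_basic[OF rh]
  have md: "Modules.module act" using M unfolding lattice_module_def by blast
  interpret Modules.module act by (rule md)
  have vs: "vector_space (\<lambda>c m. act (iota c) m)" by (rule vs_from_module[OF rh md])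
  interpret VM: ovs Ov v w "\<lambda>c m. act (iota c) m" by (intro ovs.intro dv vs)
  show "ovs Ov v w (\<lambda>c m. act (iota c) m)" by (intro ovs.intro dv vs)
  have "full_O_lattice Ov (\<lambda>c m. act (iota c) m) M" using M unfolding lattice_module_def by blast
  then obtain r b where rb: "O_basis Ov (\<lambda>c m. act (iota c) m) r b M" "VM.span (b ` {..<r}) = UNIV"
    unfolding full_O_lattice_def by blast
  have ib: "VM.indep r b" "M = VM.spanO r b" using rb(1) VM.O_basis_iff by auto
  have inj: "inj_on b {..<r}" using rb(1) unfolding O_basis_def by blast
  have "VM.spanE r b = UNIV" using VM.span_sub_spanE[OF inj] rb(2) by blast
  then show "\<exists>n b. VM.indep n b \<and> M = VM.spanO n b \<and> VM.spanE n b = UNIV" using ib by blast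
  obtain k where k: "iota (w ^ k) * e \<in> T" using T_bound[OF dv T] by blast
  have "\<forall>m\<in>M. act (iota (w ^ k)) (act e m) \<in> M"
    using k M unfolding lattice_module_def by simp
  then show "\<exists>k. \<forall>m\<in>M. act (iota (w ^ k)) (act e m) \<in> M" by blast
qed

theorem mainTheorem10:
  fixes Ov :: "'e::field set"
    and iota1 :: "'e \<Rightarrow> 'a::comm_ring_1" and T1 :: "'a set" and lam1 :: "'a \<Rightarrow> 'e" and e1 :: 'a
    and iota2 :: "'e \<Rightarrow> 'b::comm_ring_1" and T2 :: "'b set" and lam2 :: "'b \<Rightarrow> 'e" and e2 :: 'b
    and act1 :: "'a \<Rightarrow> 'v::ab_group_add \<Rightarrow> 'v" and M1 :: "'v set"
    and act2 :: "'b \<Rightarrow> 'w::ab_group_add \<Rightarrow> 'w" and M2 :: "'w set"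
    and P :: "'v \<Rightarrow> 'w \<Rightarrow> 'e"
  defines "sc1 \<equiv> \<lambda>c m. act1 (iota1 c) m"
    and "sc2 \<equiv> \<lambda>c m. act2 (iota2 c) m"
  assumes Ov_dvr: "complete_dvr Ov"
    and T1: "reduced_finite_flat_local_algebra Ov iota1 T1"
    and T2: "reduced_finite_flat_local_algebra Ov iota2 T2"
    and lam1: "O_algebra_hom_to_O Ov iota1 T1 lam1"
    and lam2: "O_algebra_hom_to_O Ov iota2 T2 lam2"
    and e1: "lambda_idempotent iota1 T1 lam1 e1"
    and e2: "lambda_idempotent iota2 T2 lam2 e2"
    and M1: "lattice_module Ov iota1 T1 act1 M1"
    and M2: "lattice_module Ov iota2 T2 act2 M2"
    and P_bil: "E_bilinear sc1 sc2 P"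
    and P_perf: "perfect_O_pairing Ov sc1 sc2 M1 M2 P"
    and orth1: "\<forall>x\<in>M1. \<forall>y\<in>M2. P (act1 e1 x) (act2 (1 - e2) y) = 0"
    and orth2: "\<forall>x\<in>M1. \<forall>y\<in>M2. P (act1 (1 - e1) x) (act2 e2 y) = 0"
  shows "perfect_E_mod_O_pairing Ov sc1 sc2
            (eM act1 e1 M1) (eM act1 e1 M1 \<inter> M1) (eM act2 e2 M2) (eM act2 e2 M2 \<inter> M2) P
         \<and> congruence_eta Ov iota1 act1 e1 M1 = congruence_eta Ov iota2 act2 e2 M2
         \<and> (\<forall>d1 d2. O_basis Ov sc1 1 (\<lambda>_. d1) (ker_torsion T1 lam1 act1 M1) \<and>
                    O_basis Ov sc2 1 (\<lambda>_. d2) (ker_torsion T2 lam2 act2 M2) \<longrightarrow>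
              congruence_eta Ov iota1 act1 e1 M1 = O_mult Ov (P d1 d2) \<and>
              congruence_eta Ov iota2 act2 e2 M2 = O_mult Ov (P d1 d2))"
proof -
  have "\<exists>v w. dvr Ov v w" using Ov_dvr unfolding complete_dvr_def dvr_def by blast
  then obtain v w where dv: "dvr Ov v w" by blast
  have md1: "Modules.module act1" using M1 unfolding lattice_module_def by blast
  have md2: "Modules.module act2" using M2 unfolding lattice_module_def by blast
  interpret A1: Modules.module act1 by (rule md1)
  interpret A2: Modules.module act2 by (rule md2)
  note L1 = lattice_data[OF dv T1 M1, folded sc1_def]
  note L2 = lattice_data[OF dv T2 M2, folded sc2_def]
  obtain n1 b1 where nb1: "ovs.indep sc1 n1 b1" "M1 = ovs.spanO Ov sc1 n1 b1" "ovs.spanE sc1 n1 b1 = UNIV"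
    using L1(2) by blast
  obtain n2 b2 where nb2: "ovs.indep sc2 n2 b2" "M2 = ovs.spanO Ov sc2 n2 b2" "ovs.spanE sc2 n2 b2 = UNIV"
    using L2(2) by blast
  obtain k1 where k1: "\<forall>m\<in>M1. sc1 (w ^ k1) (act1 e1 m) \<in> M1" using L1(3)[of e1] unfolding sc1_def by blast
  obtain k2 where k2: "\<forall>m\<in>M2. sc2 (w ^ k2) (act2 e2 m) \<in> M2" using L2(3)[of e2] unfolding sc2_def by blast
  have rh1: "ring_hom_fun iota1" using T1 unfolding reduced_finite_flat_local_algebra_def by blast
  have rh2: "ring_hom_fun iota2" using T2 unfolding reduced_finite_flat_local_algebra_def by blast
  have ee1: "e1 * e1 = e1" using e1 unfolding lambda_idempotent_def by blast
  have ee2: "e2 * e2 = e2" using e2 unfolding lambda_idempotent_def by blast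
  interpret PS: pset Ov v w sc1 sc2 M1 M2 P "act1 e1" "act2 e2" n1 b1 n2 b2
  proof (rule pset.intro[OF L1(1) L2(1)], unfold_locales)
    show "ovs.indep sc1 n1 b1" "M1 = ovs.spanO Ov sc1 n1 b1" "ovs.spanE sc1 n1 b1 = UNIV" by (fact nb1)+
    show "ovs.indep sc2 n2 b2" "M2 = ovs.spanO Ov sc2 n2 b2" "ovs.spanE sc2 n2 b2 = UNIV" by (fact nb2)+
    show "\<And>x y. act1 e1 (x + y) = act1 e1 x + act1 e1 y" by (rule A1.scale_right_distrib)
    show "\<And>x y. act2 e2 (x + y) = act2 e2 x + act2 e2 y" by (rule A2.scale_right_distrib)
    show "\<And>c x. act1 e1 (sc1 c x) = sc1 c (act1 e1 x)" unfolding sc1_def by (simp add: mult.commute)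
    show "\<And>c x. act2 e2 (sc2 c x) = sc2 c (act2 e2 x)" unfolding sc2_def by (simp add: mult.commute)
    show "\<And>x. act1 e1 (act1 e1 x) = act1 e1 x" using ee1 by simp
    show "\<And>x. act2 e2 (act2 e2 x) = act2 e2 x" using ee2 by simp
    show "\<exists>k. \<forall>m\<in>M1. sc1 (w ^ k) (act1 e1 m) \<in> M1" using k1 by blast
    show "\<exists>k. \<forall>m\<in>M2. sc2 (w ^ k) (act2 e2 m) \<in> M2" using k2 by blast
    show "E_bilinear sc1 sc2 P" by (fact P_bil)
    show "perfect_O_pairing Ov sc1 sc2 M1 M2 P" by (fact P_perf)
    show "\<forall>x\<in>M1. \<forall>y\<in>M2. P (act1 e1 x) (y - act2 e2 y) = 0"
      using orth1 by (simp add: A2.scale_left_diff_distrib)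
    show "\<forall>x\<in>M1. \<forall>y\<in>M2. P (x - act1 e1 x) (act2 e2 y) = 0"
      using orth2 by (simp add: A1.scale_left_diff_distrib)
  qed
  interpret SW: pset Ov v w sc2 sc1 M2 M1 "\<lambda>y x. P x y" "act2 e2" "act1 e1" n2 b2 n1 b1
    by (rule PS.swap)
  have eta1: "congruence_eta Ov iota1 act1 e1 M1 = fitting_ideal_quot Ov sc1 (act1 e1 ` M1) (act1 e1 ` M1 \<inter> M1)"
    unfolding congruence_eta_def eM_def sc1_def ..
  have eta2: "congruence_eta Ov iota2 act2 e2 M2 = fitting_ideal_quot Ov sc2 (act2 e2 ` M2) (act2 e2 ` M2 \<inter> M2)"
    unfolding congruence_eta_def eM_def sc2_def ..
  have part1: "perfect_E_mod_O_pairing Ov sc1 sc2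
            (eM act1 e1 M1) (eM act1 e1 M1 \<inter> M1) (eM act2 e2 M2) (eM act2 e2 M2 \<inter> M2) P"
    unfolding perfect_E_mod_O_pairing_def eM_def
  proof (intro conjI ballI allI impI)
    show "\<And>x y. x \<in> act1 e1 ` M1 \<inter> M1 \<Longrightarrow> y \<in> act2 e2 ` M2 \<Longrightarrow> P x y \<in> Ov" by (rule PS.PF1)
    show "\<And>x y. x \<in> act1 e1 ` M1 \<Longrightarrow> y \<in> act2 e2 ` M2 \<inter> M2 \<Longrightarrow> P x y \<in> Ov"
      using SW.PF1 by blast
    show "\<And>x. x \<in> act1 e1 ` M1 \<Longrightarrow> \<forall>y\<in>act2 e2 ` M2. P x y \<in> Ov \<Longrightarrow> x \<in> act1 e1 ` M1 \<inter> M1"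
      by (rule PS.PF3)
    show "\<And>f. hom_quot_to_E_mod_O Ov sc2 (act2 e2 ` M2) (act2 e2 ` M2 \<inter> M2) f \<Longrightarrow>
         \<exists>x\<in>act1 e1 ` M1. \<forall>y\<in>act2 e2 ` M2. P x y - f y \<in> Ov" by (rule PS.PF4)
    show "\<And>y. y \<in> act2 e2 ` M2 \<Longrightarrow> \<forall>x\<in>act1 e1 ` M1. P x y \<in> Ov \<Longrightarrow> y \<in> act2 e2 ` M2 \<inter> M2"
      using SW.PF3 by blast
    show "\<And>f. hom_quot_to_E_mod_O Ov sc1 (act1 e1 ` M1) (act1 e1 ` M1 \<inter> M1) f \<Longrightarrow>
         \<exists>y\<in>act2 e2 ` M2. \<forall>x\<in>act1 e1 ` M1. P x y - f x \<in> Ov" using SW.PF4 by blast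
  qed
  have part2: "congruence_eta Ov iota1 act1 e1 M1 = congruence_eta Ov iota2 act2 e2 M2"
    unfolding eta1 eta2 using PS.FI SW.FI by blast
  obtain j1 where j1: "iota1 (w ^ j1) * e1 \<in> T1" using T_bound[OF dv T1] by blast
  obtain j2 where j2: "iota2 (w ^ j2) * e2 \<in> T2" using T_bound[OF dv T2] by blast
  have wj: "w ^ j \<in> Ov" "w ^ j \<noteq> 0" for j using PS.V1.wpow_mult_O[of 1 j] PS.V1.w_nz by auto
  have kt1: "ker_torsion T1 lam1 act1 M1 = act1 e1 ` M1 \<inter> M1"
    by (rule ker_torsion_eq[OF T1 lam1 e1 M1 j1 wj])
  have kt2: "ker_torsion T2 lam2 act2 M2 = act2 e2 ` M2 \<inter> M2"
    by (rule ker_torsion_eq[OF T2 lam2 e2 M2 j2 wj])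
  have part3: "\<forall>d1 d2. O_basis Ov sc1 1 (\<lambda>_. d1) (ker_torsion T1 lam1 act1 M1) \<and>
                    O_basis Ov sc2 1 (\<lambda>_. d2) (ker_torsion T2 lam2 act2 M2) \<longrightarrow>
              congruence_eta Ov iota1 act1 e1 M1 = O_mult Ov (P d1 d2) \<and>
              congruence_eta Ov iota2 act2 e2 M2 = O_mult Ov (P d1 d2)"
  proof (intro allI impI)
    fix d1 d2
    assume "O_basis Ov sc1 1 (\<lambda>_. d1) (ker_torsion T1 lam1 act1 M1) \<and>
            O_basis Ov sc2 1 (\<lambda>_. d2) (ker_torsion T2 lam2 act2 M2)"
    then have d: "O_basis Ov sc1 1 (\<lambda>_. d1) (act1 e1 ` M1 \<inter> M1)" "O_basis Ov sc2 1 (\<lambda>_. d2) (act2 e2 ` M2 \<inter> M2)"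
      unfolding kt1 kt2 by auto
    have "congruence_eta Ov iota1 act1 e1 M1 = O_mult Ov (P d1 d2)"
      unfolding eta1 by (rule PS.PB[OF d])
    moreover have "congruence_eta Ov iota2 act2 e2 M2 = O_mult Ov (P d1 d2)"
      unfolding eta2 using SW.PB[OF d(2) d(1)] by simp
    ultimately show "congruence_eta Ov iota1 act1 e1 M1 = O_mult Ov (P d1 d2) \<and>
              congruence_eta Ov iota2 act2 e2 M2 = O_mult Ov (P d1 d2)" by blast
  qed
  show ?thesis using part1 part2 part3 by blast
qed


end
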